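(* For every instance of the general contact-tracing model (described in the context) there is an optimal policy that is an index policy on the set of types, i.e., there is a total order on the set of types $T_{\mathrm{set}}=(C\cup\{\perp\})\times C$ such that the policy that always queries a frontier node whose type is earliest in this order is optimal. Moreover, such an order is produced by the following construction. For a type $i$ and a sequence $\sigma_0,\dots,\sigma_{k-1}$ of distinct types, an $(i,\sigma_{k-1})$-period starts with a frontier consisting of a single node of type $i$, queries it at relative step $0$, and thereafter at each relative step $s$ queries a frontier node whose type lies in $\{\sigma_0,\dots,\sigma_{k-1}\}$, choosing the type earliest in $\sigma_0,\dots,\sigma_{k-1}$, stopping when no frontier node has such a type; let $r(i,\sigma_{k-1})$ be the total benefit collected with benefits at relative step $s$ discounted by $e^{-\beta s}$, let $\tau(i,\sigma_{k-1})$ be the number of queries made, and $\gamma(i,\sigma_{k-1})=\mathbb{E}[e^{-\beta\tau(i,\sigma_{k-1})}]$ (for $k=0$ the period consists only of the single query of the type-$i$ node). Set $\sigma_0\in\arg\max_i \mathbb{E}[r(i,\emptyset)]$ and, for $k\ge 1$, $\sigma_k\in\arg\max_{i\notin\{\sigma_0,\dots,\sigma_{k-1}\}} \mathbb{E}[r(i,\sigma_{k-1})]/(1-\gamma(i,\sigma_{k-1}))$. The index policy defined by the resulting order $\sigma$ is optimal.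
   Context: General model. Fix a finite set $C$ of categories (each category encodes attributes such as a recency and a role), a super-root symbol $\perp$, a function $p:(C\cup\{\perp\})\times C\to[0,1]$, benefits $b(c)\in[0,1]$ for $c\in C$, for each $c\in C$ a probability distribution $D_c$ on finite multisets of elements of $C$, and a discount parameter $\beta>0$. Each node has a category; the type of a node is the pair $(c(u),c(v))$ where $v$ is the node and $u$ its parent (index cases have parent $\perp$). A node of type $(c',c)$ is infected independently with probability $p(c',c)$; if infected, its children form a multiset of categories drawn from $D_c$ independently of everything else, and a child of category $k$ has type $(c,k)$. Contact tracing: at step $t=0$ the frontier is a given finite multiset of index cases (with given categories, hence types $(\perp,c)$). At each step $t=0,1,2,\dots$ while the frontier is nonempty, the tracer selects one frontier node and queries it, removing it from the frontier; the query reveals its infection status; if it is infected and has category $c$, benefit $b(c)e^{-\beta t}$ is collected and its children (with their types) are added to the frontier; otherwise benefit $0$ is collected and nothing is added. Nodes of the same type are indistinguishable before being queried, so a policy is a (possibly history-dependent) rule choosing at each step which type present in the frontier to query. A policy is optimal if for every initial frontier it maximizes the expected total collected benefit over all policies. Ties in the arg max may be broken arbitrarily. *)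

theory Defs
  imports "HOL-Probability.Probability" "HOL-Library.Multiset"
begin

text \<open>Categories form a finite type 'c (so C = UNIV).  The super-root is None.
  A type of a node is the pair (category of parent or None, category of node).\<close>

type_synonym 'c ntype = "'c option \<times> 'c"
type_synonym 'c frontier = "'c ntype multiset"
text \<open>History: queried type together with the revealed outcome
  (None = not infected, Some M = infected with children multiset M).\<close>
type_synonym 'c hist = "('c ntype \<times> 'c multiset option) list"
type_synonym 'c policy = "'c hist \<Rightarrow> 'c frontier \<Rightarrow> 'c ntype"

definition children :: "'c ntype \<Rightarrow> 'c multiset \<Rightarrow> 'c frontier" where
  "children ty M = image_mset (\<lambda>k. (Some (snd ty), k)) M"

definition valid_policy :: "'c policy \<Rightarrow> bool" where
  "valid_policy pol \<longleftrightarrow> (\<forall>h F. F \<noteq> {#} \<longrightarrow> pol h F \<in># F)"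

primrec Vn :: "('c ntype \<Rightarrow> real) \<Rightarrow> ('c \<Rightarrow> real) \<Rightarrow> ('c \<Rightarrow> 'c multiset pmf) \<Rightarrow> real
    \<Rightarrow> nat \<Rightarrow> 'c policy \<Rightarrow> 'c hist \<Rightarrow> 'c frontier \<Rightarrow> real" where
  "Vn p b D \<beta> 0 pol h F = 0"
| "Vn p b D \<beta> (Suc n) pol h F =
     (if F = {#} then 0 else
      (let ty = pol h F; F' = F - {#ty#} in
         p ty * (b (snd ty) * exp (- \<beta> * real (length h))
                 + measure_pmf.expectation (D (snd ty))
                     (\<lambda>M. Vn p b D \<beta> n pol (h @ [(ty, Some M)]) (F' + children ty M)))
       + (1 - p ty) * Vn p b D \<beta> n pol (h @ [(ty, None)]) F'))"

definition policy_value :: "('c ntype \<Rightarrow> real) \<Rightarrow> ('c \<Rightarrow> real) \<Rightarrow> ('c \<Rightarrow> 'c multiset pmf) \<Rightarrow> real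
    \<Rightarrow> 'c policy \<Rightarrow> 'c frontier \<Rightarrow> real" where
  "policy_value p b D \<beta> pol F0 = (SUP n. Vn p b D \<beta> n pol [] F0)"

definition optimal_policy :: "('c ntype \<Rightarrow> real) \<Rightarrow> ('c \<Rightarrow> real) \<Rightarrow> ('c \<Rightarrow> 'c multiset pmf) \<Rightarrow> real
    \<Rightarrow> 'c policy \<Rightarrow> bool" where
  "optimal_policy p b D \<beta> pol \<longleftrightarrow> valid_policy pol \<and>
     (\<forall>F0. (\<forall>x\<in>#F0. fst x = None) \<longrightarrow>
        (\<forall>pol'. valid_policy pol' \<longrightarrow> policy_value p b D \<beta> pol' F0 \<le> policy_value p b D \<beta> pol F0))"

definition first_in :: "'c ntype list \<Rightarrow> 'c frontier \<Rightarrow> 'c ntype option" where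
  "first_in ps F = (case filter (\<lambda>x. x \<in># F) ps of [] \<Rightarrow> None | x # _ \<Rightarrow> Some x)"

definition index_policy :: "'c ntype list \<Rightarrow> 'c policy" where
  "index_policy \<sigma> h F = (case first_in \<sigma> F of Some x \<Rightarrow> x | None \<Rightarrow> undefined)"

definition is_type_order :: "'c ntype list \<Rightarrow> bool" where
  "is_type_order \<sigma> \<longleftrightarrow> distinct \<sigma> \<and> set \<sigma> = UNIV"

text \<open>Periods.  A chooser maps (relative step s, frontier) to the type queried, or None = stop.\<close>
primrec PRn :: "('c ntype \<Rightarrow> real) \<Rightarrow> ('c \<Rightarrow> real) \<Rightarrow> ('c \<Rightarrow> 'c multiset pmf) \<Rightarrow> real
    \<Rightarrow> nat \<Rightarrow> (nat \<Rightarrow> 'c frontier \<Rightarrow> 'c ntype option) \<Rightarrow> 'c frontier \<Rightarrow> nat \<Rightarrow> real" where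
  "PRn p b D \<beta> 0 ch F s = 0"
| "PRn p b D \<beta> (Suc n) ch F s =
     (case ch s F of None \<Rightarrow> 0
      | Some ty \<Rightarrow> (let F' = F - {#ty#} in
          p ty * (b (snd ty) * exp (- \<beta> * real s)
                  + measure_pmf.expectation (D (snd ty))
                      (\<lambda>M. PRn p b D \<beta> n ch (F' + children ty M) (Suc s)))
          + (1 - p ty) * PRn p b D \<beta> n ch F' (Suc s)))"

text \<open>Truncated approximations of E[exp(-beta * tau)] (tau = number of queries);
  runs not stopped within n steps contribute 0, and the limit treats tau = infinity as 0.\<close>
primrec PGn :: "('c ntype \<Rightarrow> real) \<Rightarrow> ('c \<Rightarrow> 'c multiset pmf) \<Rightarrow> real
    \<Rightarrow> nat \<Rightarrow> (nat \<Rightarrow> 'c frontier \<Rightarrow> 'c ntype option) \<Rightarrow> 'c frontier \<Rightarrow> nat \<Rightarrow> real" where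
  "PGn p D \<beta> 0 ch F s = 0"
| "PGn p D \<beta> (Suc n) ch F s =
     (case ch s F of None \<Rightarrow> exp (- \<beta> * real s)
      | Some ty \<Rightarrow> (let F' = F - {#ty#} in
          p ty * measure_pmf.expectation (D (snd ty))
                      (\<lambda>M. PGn p D \<beta> n ch (F' + children ty M) (Suc s))
          + (1 - p ty) * PGn p D \<beta> n ch F' (Suc s)))"

definition period_ch :: "'c ntype \<Rightarrow> 'c ntype list \<Rightarrow> nat \<Rightarrow> 'c frontier \<Rightarrow> 'c ntype option" where
  "period_ch i ps s F = (if s = 0 then Some i else first_in ps F)"

definition period_r :: "('c ntype \<Rightarrow> real) \<Rightarrow> ('c \<Rightarrow> real) \<Rightarrow> ('c \<Rightarrow> 'c multiset pmf) \<Rightarrow> real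
    \<Rightarrow> 'c ntype \<Rightarrow> 'c ntype list \<Rightarrow> real" where
  "period_r p b D \<beta> i ps = (SUP n. PRn p b D \<beta> n (period_ch i ps) {#i#} 0)"

definition period_gamma :: "('c ntype \<Rightarrow> real) \<Rightarrow> ('c \<Rightarrow> 'c multiset pmf) \<Rightarrow> real
    \<Rightarrow> 'c ntype \<Rightarrow> 'c ntype list \<Rightarrow> real" where
  "period_gamma p D \<beta> i ps = (SUP n. PGn p D \<beta> n (period_ch i ps) {#i#} 0)"

definition constructed_order :: "('c ntype \<Rightarrow> real) \<Rightarrow> ('c \<Rightarrow> real) \<Rightarrow> ('c \<Rightarrow> 'c multiset pmf) \<Rightarrow> real
    \<Rightarrow> 'c ntype list \<Rightarrow> bool" where
  "constructed_order p b D \<beta> \<sigma> \<longleftrightarrow> is_type_order \<sigma> \<and>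
     (\<forall>i. period_r p b D \<beta> i [] \<le> period_r p b D \<beta> (\<sigma> ! 0) []) \<and>
     (\<forall>k. 1 \<le> k \<and> k < length \<sigma> \<longrightarrow>
        (\<forall>i. i \<notin> set (take k \<sigma>) \<longrightarrow>
           period_r p b D \<beta> i (take k \<sigma>) / (1 - period_gamma p D \<beta> i (take k \<sigma>))
           \<le> period_r p b D \<beta> (\<sigma> ! k) (take k \<sigma>) / (1 - period_gamma p D \<beta> (\<sigma> ! k) (take k \<sigma>))))"

end

theory Submission
  imports Defs
begin


abbreviation EE :: "'a pmf \<Rightarrow> ('a \<Rightarrow> real) \<Rightarrow> real" where
  "EE P f \<equiv> measure_pmf.expectation P f"

lemma int_bdd: fixes f :: "'a \<Rightarrow> real" assumes "\<And>x. \<bar>f x\<bar> \<le> B" shows "integrable (measure_pmf P) f"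
  by (rule measure_pmf.integrable_const_bound[where B=B]) (auto simp: assms)

lemma EE_bnd: fixes f :: "'a \<Rightarrow> real" assumes "\<And>x. \<bar>f x\<bar> \<le> B" shows "\<bar>EE P f\<bar> \<le> B"
proof -
  have "\<bar>EE P f\<bar> \<le> EE P (\<lambda>x. \<bar>f x\<bar>)"
    using integral_norm_bound[of "measure_pmf P" f] by simp
  also have "\<dots> \<le> EE P (\<lambda>x. B)"
    by (rule integral_mono) (auto intro: int_bdd[where B=B] simp: assms)
  finally show ?thesis by simp
qed

lemma EE_mono: fixes f g :: "'a \<Rightarrow> real" assumes "\<And>x. \<bar>f x\<bar> \<le> B" "\<And>x. \<bar>g x\<bar> \<le> C" "\<And>x. f x \<le> g x"
  shows "EE P f \<le> EE P g"
  by (rule integral_mono) (auto intro: int_bdd assms)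

lemma EE_add: fixes f g :: "'a \<Rightarrow> real" assumes "\<And>x. \<bar>f x\<bar> \<le> B" "\<And>x. \<bar>g x\<bar> \<le> C"
  shows "EE P (\<lambda>x. f x + g x) = EE P f + EE P g"
  by (rule Bochner_Integration.integral_add) (auto intro: int_bdd assms)

lemma EE_diff: fixes f g :: "'a \<Rightarrow> real" assumes "\<And>x. \<bar>f x\<bar> \<le> B" "\<And>x. \<bar>g x\<bar> \<le> C"
  shows "EE P (\<lambda>x. f x - g x) = EE P f - EE P g"
  by (rule Bochner_Integration.integral_diff) (auto intro: int_bdd assms)

lemma EE_cmult: "EE P (\<lambda>x. c * f x) = c * EE P f"
  by simp

lemma EE_lin: fixes f g :: "'a \<Rightarrow> real" assumes "\<And>x. \<bar>f x\<bar> \<le> B" "\<And>x. \<bar>g x\<bar> \<le> C"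
  shows "EE P (\<lambda>x. u * f x + v * g x) = u * EE P f + v * EE P g"
proof -
  have "EE P (\<lambda>x. u * f x + v * g x) = EE P (\<lambda>x. u * f x) + EE P (\<lambda>x. v * g x)"
    by (rule EE_add[where B="\<bar>u\<bar>*B" and C="\<bar>v\<bar>*C"]) (simp_all add: abs_mult mult_left_mono assms)
  then show ?thesis by simp
qed

lemma EE_fub: fixes f :: "'a \<Rightarrow> 'b \<Rightarrow> real" assumes "\<And>x y. \<bar>f x y\<bar> \<le> B"
  shows "EE P (\<lambda>x. EE Q (\<lambda>y. f x y)) = EE Q (\<lambda>y. EE P (\<lambda>x. f x y))"
proof -
  have m: "\<And>(A::'x pmf) (g::'x \<Rightarrow> 'y pmf). (\<lambda>x. measure_pmf (g x)) \<in> measurable (measure_pmf A) (subprob_algebra (count_space UNIV))"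
    by (simp add: measurable_pmf_measure1 measure_pmf_in_subprob_space)
  have gen: "\<And>(A::'x pmf) (g::'x \<Rightarrow> 'y pmf) (h :: 'y \<Rightarrow> real) C. (\<And>z. \<bar>h z\<bar> \<le> C) \<Longrightarrow>
     EE (bind_pmf A g) h = EE A (\<lambda>x. EE (g x) h)"
    unfolding measure_pmf_bind
    apply (rule integral_bind[where B'=1 and K="count_space UNIV"])
    by (auto simp: m measure_pmf.emeasure_space_1 measure_pmf_in_subprob_space intro: measure_pmf.finite_measure)
  have pe: "\<And>(A::'x pmf) (B::'y pmf) (h::'x\<times>'y \<Rightarrow> real) C. (\<And>z. \<bar>h z\<bar> \<le> C) \<Longrightarrow>
     EE (pair_pmf A B) h = EE A (\<lambda>x. EE B (\<lambda>y. h (x,y)))"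
  proof -
    fix A :: "'x pmf" and B :: "'y pmf" and h :: "'x\<times>'y \<Rightarrow> real" and C
    assume hC: "\<And>z. \<bar>h z\<bar> \<le> C"
    show "EE (pair_pmf A B) h = EE A (\<lambda>x. EE B (\<lambda>y. h (x,y)))"
      unfolding pair_pmf_def
      apply (subst gen[OF hC])
      apply (subst gen[OF hC])
      by simp
  qed
  have "EE P (\<lambda>x. EE Q (\<lambda>y. f x y)) = EE (pair_pmf P Q) (\<lambda>(x,y). f x y)"
    using pe[of "\<lambda>(x,y). f x y" B P Q] assms by (auto split: prod.splits)
  also have "\<dots> = EE (pair_pmf Q P) (\<lambda>(y,x). f x y)"
    by (subst pair_commute_pmf) (simp add: case_prod_unfold)
  also have "\<dots> = EE Q (\<lambda>y. EE P (\<lambda>x. f x y))"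
    using pe[of "\<lambda>(y,x). f x y" B Q P] assms by (auto split: prod.splits)
  finally show ?thesis .
qed


lemma incseq_SUP_lim: fixes X :: "nat \<Rightarrow> real" assumes "incseq X" "X \<longlonglongrightarrow> L" shows "(SUP n. X n) = L"
proof -
  have "X n \<le> L" for n using incseq_le[OF assms] .
  then have "bdd_above (range X)" by (intro bdd_aboveI2)
  from LIMSEQ_incseq_SUP[OF this assms(1)] assms(2) show ?thesis using LIMSEQ_unique by blast
qed

lemma le_zero_geom: fixes x C q :: real assumes "\<And>n. x \<le> q^n * C" "0 \<le> q" "q < 1" shows "x \<le> 0"
proof -
  have "(\<lambda>n. q^n) \<longlonglongrightarrow> 0" by (rule LIMSEQ_power_zero) (use assms in auto)
  then have "(\<lambda>n. q^n * C) \<longlonglongrightarrow> 0 * C" by (rule tendsto_mult[OF _ tendsto_const])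
  then have "x \<le> 0 * C" by (rule LIMSEQ_le_const) (use assms(1) in blast)
  then show ?thesis by simp
qed

lemma fi_None: "first_in ps F = None \<longleftrightarrow> (\<forall>x\<in>set ps. x \<notin># F)"
proof -
  have "first_in ps F = None \<longleftrightarrow> filter (\<lambda>x. x \<in># F) ps = []"
    by (auto simp: first_in_def split: list.splits)
  then show ?thesis by (simp add: filter_empty_conv)
qed

lemma fi_Some: "first_in ps F = Some a \<Longrightarrow> a \<in># F \<and> a \<in> set ps"
proof -
  assume "first_in ps F = Some a"
  then obtain r where "filter (\<lambda>x. x \<in># F) ps = a # r" unfolding first_in_def by (auto split: list.splits)
  then have "a \<in> set (filter (\<lambda>x. x \<in># F) ps)" by simp
  then show ?thesis by simp
qed

lemma fi_prefix: "first_in (take k ps) F = Some a \<Longrightarrow> first_in ps F = Some a"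
proof -
  assume h: "first_in (take k ps) F = Some a"
  have "ps = take k ps @ drop k ps" by simp
  then have "filter (\<lambda>x. x \<in># F) ps = filter (\<lambda>x. x \<in># F) (take k ps) @ filter (\<lambda>x. x \<in># F) (drop k ps)"
    by (metis filter_append)
  with h show ?thesis unfolding first_in_def by (auto split: list.splits)
qed

lemma fi_at: assumes "k < length ps" "\<forall>x\<in>set (take k ps). x \<notin># F" "ps ! k \<in># F"
  shows "first_in ps F = Some (ps ! k)"
proof -
  have e: "ps = take k ps @ ps ! k # drop (Suc k) ps" using assms(1) by (simp add: id_take_nth_drop)
  have "filter (\<lambda>x. x \<in># F) (take k ps) = []" using assms(2) by (simp add: filter_empty_conv)
  then have "filter (\<lambda>x. x \<in># F) ps = ps ! k # filter (\<lambda>x. x \<in># F) (drop (Suc k) ps)"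
    using assms(3) by (subst e) simp
  then show ?thesis unfolding first_in_def by simp
qed

lemma fi_add: "\<forall>x\<in>set ps. x \<notin># H \<Longrightarrow> first_in ps (G + H) = first_in ps G"
proof -
  assume "\<forall>x\<in>set ps. x \<notin># H"
  then have "filter (\<lambda>x. x \<in># G + H) ps = filter (\<lambda>x. x \<in># G) ps" by (intro filter_cong) auto
  then show ?thesis unfolding first_in_def by simp
qed

lemma fi_total: "set ps = UNIV \<Longrightarrow> F \<noteq> {#} \<Longrightarrow> \<exists>a. first_in ps F = Some a"
proof -
  assume "set ps = UNIV" "F \<noteq> {#}"
  then obtain x where "x \<in># F" by blast
  then have "first_in ps F \<noteq> None" using fi_None[of ps F] \<open>set ps = UNIV\<close> by auto
  then show ?thesis by auto
qed



lemma conv_bound: fixes X Y M u :: real assumes "0 \<le> u" "u \<le> 1" "\<bar>X\<bar> \<le> M" "\<bar>Y\<bar> \<le> M"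
  shows "\<bar>u * X + (1 - u) * Y\<bar> \<le> M"
proof -
  have "\<bar>u * X + (1 - u) * Y\<bar> \<le> \<bar>u * X\<bar> + \<bar>(1 - u) * Y\<bar>" by (rule abs_triangle_ineq)
  also have "\<dots> = u * \<bar>X\<bar> + (1 - u) * \<bar>Y\<bar>" using assms by (simp add: abs_mult)
  also have "\<dots> \<le> u * M + (1 - u) * M" using assms by (intro add_mono mult_left_mono) auto
  finally show ?thesis by (simp add: algebra_simps)
qed

lemma geo_conv: fixes X :: "nat \<Rightarrow> real" assumes "\<And>n. \<bar>X n - L\<bar> \<le> c * q^n" "0 \<le> q" "q < 1"
  shows "X \<longlonglongrightarrow> L"
proof -
  have "(\<lambda>n. q^n) \<longlonglongrightarrow> 0" by (rule LIMSEQ_power_zero) (use assms in auto)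
  then have t: "(\<lambda>n. c * q^n) \<longlonglongrightarrow> c * 0" by (rule tendsto_mult[OF tendsto_const])
  have "(\<lambda>n. X n - L) \<longlonglongrightarrow> 0"
    by (rule Lim_null_comparison[where g="\<lambda>n. c * q^n"]) (use assms(1) t in auto)
  then have "(\<lambda>n. (X n - L) + L) \<longlonglongrightarrow> 0 + L" by (rule tendsto_add[OF _ tendsto_const])
  then show ?thesis by simp
qed

lemma half_cancel: "x \<noteq> 0 \<Longrightarrow> e / (2 * x) * x = e / (2::real)"
  by (simp add: field_simps)

locale ct =
  fixes p :: "('c::finite) ntype \<Rightarrow> real" and b :: "'c \<Rightarrow> real"
    and D :: "'c \<Rightarrow> 'c multiset pmf" and \<beta> :: real
  assumes p01: "\<And>ty. 0 \<le> p ty \<and> p ty \<le> 1" and b01: "\<And>c. 0 \<le> b c \<and> b c \<le> 1" and bpos: "\<beta> > 0"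
begin

definition q :: real where "q = exp (- \<beta>)"

lemma q_pos: "0 < q" and q_lt1: "q < 1"
  using bpos by (auto simp: q_def)

lemma p0: "0 \<le> p ty" and p1: "p ty \<le> 1" using p01 by auto

definition step :: "('c \<Rightarrow> real) \<Rightarrow> 'c ntype \<Rightarrow> ('c frontier \<Rightarrow> real) \<Rightarrow> 'c frontier \<Rightarrow> real" where
  "step rb a Z G = p a * (rb (snd a) + q * EE (D (snd a)) (\<lambda>M. Z (G - {#a#} + children a M)))
      + (1 - p a) * (q * Z (G - {#a#}))"

lemma step_bound: assumes "\<And>c. \<bar>rb c\<bar> \<le> R" "\<And>G. \<bar>Z G\<bar> \<le> K"
  shows "\<bar>step rb a Z G\<bar> \<le> R + q * K"
proof -
  have e: "\<bar>EE (D (snd a)) (\<lambda>M. Z (G - {#a#} + children a M))\<bar> \<le> K" by (rule EE_bnd) (rule assms(2))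
  have R0: "0 \<le> R" using assms(1)[of undefined] by simp
  have qe: "\<bar>q * EE (D (snd a)) (\<lambda>M. Z (G - {#a#} + children a M))\<bar> \<le> q * K"
    using e q_pos by (simp add: abs_mult mult_left_mono)
  have "\<bar>rb (snd a) + q * EE (D (snd a)) (\<lambda>M. Z (G - {#a#} + children a M))\<bar> \<le> R + q * K"
    using abs_triangle_ineq[of "rb (snd a)" "q * EE (D (snd a)) (\<lambda>M. Z (G - {#a#} + children a M))"] assms(1)[of "snd a"] qe
    by linarith
  moreover have "\<bar>q * Z (G - {#a#})\<bar> \<le> R + q * K"
  proof -
    have "\<bar>q * Z (G - {#a#})\<bar> \<le> q * K" using assms(2)[of "G - {#a#}"] q_pos by (simp add: abs_mult mult_left_mono)
    then show ?thesis using R0 by linarith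
  qed
  ultimately show ?thesis unfolding step_def by (intro conv_bound) (auto simp: p0 p1)
qed

lemma step_diff: assumes "\<And>G. \<bar>Z1 G\<bar> \<le> Ka" "\<And>G. \<bar>Z2 G\<bar> \<le> Kb" "\<And>G. \<bar>Z1 G - Z2 G\<bar> \<le> B"
  shows "\<bar>step rb a Z1 G - step rb a Z2 G\<bar> \<le> q * B"
proof -
  let ?E = "\<lambda>Z. EE (D (snd a)) (\<lambda>M. Z (G - {#a#} + children a M))"
  have "?E Z1 - ?E Z2 = EE (D (snd a)) (\<lambda>M. Z1 (G - {#a#} + children a M) - Z2 (G - {#a#} + children a M))"
    by (rule EE_diff[symmetric]) (use assms in auto)
  moreover have "\<bar>EE (D (snd a)) (\<lambda>M. Z1 (G - {#a#} + children a M) - Z2 (G - {#a#} + children a M))\<bar> \<le> B"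
    by (rule EE_bnd) (use assms in auto)
  ultimately have e: "\<bar>?E Z1 - ?E Z2\<bar> \<le> B" by simp
  have "step rb a Z1 G - step rb a Z2 G = q * (p a * (?E Z1 - ?E Z2) + (1 - p a) * (Z1 (G - {#a#}) - Z2 (G - {#a#})))"
    unfolding step_def by (simp add: algebra_simps)
  moreover have "\<bar>p a * (?E Z1 - ?E Z2) + (1 - p a) * (Z1 (G - {#a#}) - Z2 (G - {#a#}))\<bar> \<le> B"
    by (rule conv_bound) (use e assms(3) p0 p1 in auto)
  ultimately show ?thesis using q_pos by (simp add: abs_mult mult_left_mono)
qed

lemma step_mono: assumes "\<And>G. \<bar>Z1 G\<bar> \<le> Ka" "\<And>G. \<bar>Z2 G\<bar> \<le> Kb" "\<And>G. Z1 G \<le> Z2 G"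
  shows "step rb a Z1 G \<le> step rb a Z2 G"
proof -
  have "EE (D (snd a)) (\<lambda>M. Z1 (G - {#a#} + children a M)) \<le> EE (D (snd a)) (\<lambda>M. Z2 (G - {#a#} + children a M))"
    by (rule EE_mono) (use assms in auto)
  then show ?thesis unfolding step_def using q_pos p0[of a] p1[of a] assms(3)[of "G - {#a#}"]
    by (intro add_mono mult_left_mono) auto
qed

lemma step_nonneg: assumes "\<And>c. 0 \<le> rb c" "\<And>G. 0 \<le> Z G"
  shows "0 \<le> step rb a Z G"
proof -
  have "0 \<le> EE (D (snd a)) (\<lambda>M. Z (G - {#a#} + children a M))"
    by (rule Bochner_Integration.integral_nonneg) (use assms in auto)
  then show ?thesis unfolding step_def using q_pos p0[of a] p1[of a] assms
    by (intro add_nonneg_nonneg mult_nonneg_nonneg) auto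
qed

lemma step_add: assumes "\<And>G. \<bar>Z1 G\<bar> \<le> Ka" "\<And>G. \<bar>Z2 G\<bar> \<le> Kb"
  shows "step (\<lambda>c. r1 c + r2 c) a (\<lambda>G. Z1 G + Z2 G) G = step r1 a Z1 G + step r2 a Z2 G"
proof -
  have "EE (D (snd a)) (\<lambda>M. Z1 (G - {#a#} + children a M) + Z2 (G - {#a#} + children a M))
     = EE (D (snd a)) (\<lambda>M. Z1 (G - {#a#} + children a M)) + EE (D (snd a)) (\<lambda>M. Z2 (G - {#a#} + children a M))"
    by (rule EE_add) (use assms in auto)
  then show ?thesis unfolding step_def by (simp add: algebra_simps)
qed

lemma step_scale: "step (\<lambda>c. u * r c) a (\<lambda>G. u * Z G) G = u * step r a Z G"
  unfolding step_def by (simp add: algebra_simps)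

lemma step_const0: "step (\<lambda>_. 0) a (\<lambda>_. x) G = q * x"
  unfolding step_def by (simp add: algebra_simps)

lemma step_cong: assumes "\<And>M. Z (G - {#a#} + children a M) = Z' (G' - {#a#} + children a M)"
    "Z (G - {#a#}) = Z' (G' - {#a#})"
  shows "step rb a Z G = step rb a Z' G'"
  unfolding step_def using assms by simp

primrec RunT :: "('c \<Rightarrow> real) \<Rightarrow> 'c ntype list \<Rightarrow> ('c frontier \<Rightarrow> real) \<Rightarrow> nat \<Rightarrow> 'c frontier \<Rightarrow> real" where
  "RunT rb ps Y 0 G = 0"
| "RunT rb ps Y (Suc n) G = (case first_in ps G of None \<Rightarrow> Y G | Some a \<Rightarrow> step rb a (RunT rb ps Y n) G)"

definition RV :: "('c \<Rightarrow> real) \<Rightarrow> 'c ntype list \<Rightarrow> ('c frontier \<Rightarrow> real) \<Rightarrow> 'c frontier \<Rightarrow> real" where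
  "RV rb ps Y G = lim (\<lambda>n. RunT rb ps Y n G)"

definition FP :: "('c \<Rightarrow> real) \<Rightarrow> 'c ntype list \<Rightarrow> ('c frontier \<Rightarrow> real) \<Rightarrow> ('c frontier \<Rightarrow> real) \<Rightarrow> bool" where
  "FP rb ps Y Z \<longleftrightarrow> (\<forall>G. Z G = (case first_in ps G of None \<Rightarrow> Y G | Some a \<Rightarrow> step rb a Z G))"

definition KK :: "real \<Rightarrow> real \<Rightarrow> real" where "KK R B = B + R / (1 - q)"

lemma KK_ge: "0 \<le> R \<Longrightarrow> B \<le> KK R B" unfolding KK_def using q_lt1 by simp

lemma RunT_bound: assumes "\<And>c. \<bar>rb c\<bar> \<le> R" "\<And>G. \<bar>Y G\<bar> \<le> B"
  shows "\<bar>RunT rb ps Y n G\<bar> \<le> KK R B"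
proof (induction n arbitrary: G)
  case 0
  have "0 \<le> R" "0 \<le> B" using assms(1)[of undefined] assms(2)[of undefined] by auto
  then show ?case using q_lt1 by (simp add: KK_def)
next
  case (Suc n)
  have R0: "0 \<le> R" "0 \<le> B" using assms(1)[of undefined] assms(2)[of undefined] by auto
  show ?case
  proof (cases "first_in ps G")
    case None
    then show ?thesis using assms(2)[of G] KK_ge[OF R0(1), of B] by simp
  next
    case (Some a)
    have "\<bar>step rb a (RunT rb ps Y n) G\<bar> \<le> R + q * KK R B"
      by (rule step_bound) (use assms Suc in auto)
    also have "\<dots> \<le> KK R B"
    proof -
      have "R + q * (B + R / (1 - q)) = q * B + R / (1 - q)" using q_lt1 by (simp add: field_simps)
      then show ?thesis unfolding KK_def using q_pos q_lt1 R0 by (smt (verit) mult_left_le_one_le)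
    qed
    finally show ?thesis using Some by simp
  qed
qed

lemma RunT_cauchy: assumes "\<And>c. \<bar>rb c\<bar> \<le> R" "\<And>G. \<bar>Y G\<bar> \<le> B"
  shows "\<bar>RunT rb ps Y (n + m) G - RunT rb ps Y n G\<bar> \<le> q^n * KK R B"
proof (induction n arbitrary: G)
  case 0
  then show ?case using RunT_bound[OF assms] by simp
next
  case (Suc n)
  show ?case
  proof (cases "first_in ps G")
    case None
    then show ?thesis using q_pos RunT_bound[OF assms, where ps=ps and n=0 and G=G]
      by simp
  next
    case (Some a)
    have "\<bar>step rb a (RunT rb ps Y (n + m)) G - step rb a (RunT rb ps Y n) G\<bar> \<le> q * (q^n * KK R B)"
      by (rule step_diff) (use RunT_bound[OF assms] Suc in auto)
    then show ?thesis using Some by simp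
  qed
qed

lemma RV_lim: assumes "\<And>c. \<bar>rb c\<bar> \<le> R" "\<And>G. \<bar>Y G\<bar> \<le> B"
  shows "(\<lambda>n. RunT rb ps Y n G) \<longlonglongrightarrow> RV rb ps Y G"
proof -
  let ?X = "\<lambda>n. RunT rb ps Y n G"
  have "Cauchy ?X"
  proof (rule CauchyI)
    fix e :: real assume e: "0 < e"
    have K0: "0 \<le> KK R B" using RunT_bound[OF assms, where ps=ps and n=0 and G=G] by simp
    obtain N where N: "q^N < e / (2 * (KK R B + 1))"
      using real_arch_pow_inv[of "e / (2 * (KK R B + 1))" q] e K0 q_lt1 by auto
    have "q^N * KK R B < e / 2"
    proof -
      have "q^N * KK R B \<le> q^N * (KK R B + 1)" using q_pos by simp
      also have "\<dots> < e / (2 * (KK R B + 1)) * (KK R B + 1)" using N K0 by (intro mult_strict_right_mono) auto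
      also have "e / (2 * (KK R B + 1)) * (KK R B + 1) = e / 2"
      proof -
        have "KK R B + 1 \<noteq> 0" using K0 by simp
        then show ?thesis using half_cancel by blast
      qed
      finally show ?thesis .
    qed
    moreover have cN: "\<And>m. m \<ge> N \<Longrightarrow> \<bar>?X m - ?X N\<bar> \<le> q^N * KK R B"
    proof -
      fix m :: nat assume "m \<ge> N"
      then have "N + (m - N) = m" by simp
      then show "\<bar>?X m - ?X N\<bar> \<le> q^N * KK R B" using RunT_cauchy[OF assms, where n=N and m="m-N" and G=G and ps=ps] by simp
    qed
    ultimately show "\<exists>M. \<forall>m\<ge>M. \<forall>n\<ge>M. norm (?X m - ?X n) < e"
    proof (intro exI[of _ N] allI impI)
      fix m n :: nat assume "m \<ge> N" "n \<ge> N"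
      assume h: "q^N * KK R B < e / 2"
      have "\<bar>?X m - ?X N\<bar> \<le> q^N * KK R B" "\<bar>?X n - ?X N\<bar> \<le> q^N * KK R B"
        using cN \<open>m \<ge> N\<close> \<open>n \<ge> N\<close> by auto
      then show "norm (?X m - ?X n) < e" using h unfolding real_norm_def by linarith
    qed
  qed
  then have "convergent ?X" by (simp add: Cauchy_convergent_iff)
  then show ?thesis unfolding RV_def by (simp add: convergent_LIMSEQ_iff)
qed

lemma RV_approx: assumes "\<And>c. \<bar>rb c\<bar> \<le> R" "\<And>G. \<bar>Y G\<bar> \<le> B"
  shows "\<bar>RV rb ps Y G - RunT rb ps Y n G\<bar> \<le> q^n * KK R B"
proof -
  have "(\<lambda>m. RunT rb ps Y (m + n) G) \<longlonglongrightarrow> RV rb ps Y G"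
    using LIMSEQ_ignore_initial_segment[OF RV_lim[OF assms]] .
  then have lim: "(\<lambda>m. \<bar>RunT rb ps Y (m + n) G - RunT rb ps Y n G\<bar>) \<longlonglongrightarrow> \<bar>RV rb ps Y G - RunT rb ps Y n G\<bar>"
    by (intro tendsto_rabs tendsto_diff tendsto_const)
  have bd: "\<And>m. \<bar>RunT rb ps Y (m + n) G - RunT rb ps Y n G\<bar> \<le> q^n * KK R B"
    using RunT_cauchy[OF assms, where n=n] by (simp add: add.commute)
  show ?thesis using LIMSEQ_le_const2[OF lim] bd by blast
qed

lemma RV_bound: assumes "\<And>c. \<bar>rb c\<bar> \<le> R" "\<And>G. \<bar>Y G\<bar> \<le> B"
  shows "\<bar>RV rb ps Y G\<bar> \<le> KK R B"
  using RV_approx[OF assms, where ps=ps and G=G and n=0] by simp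

lemma RV_FP: assumes "\<And>c. \<bar>rb c\<bar> \<le> R" "\<And>G. \<bar>Y G\<bar> \<le> B"
  shows "FP rb ps Y (RV rb ps Y)"
  unfolding FP_def
proof
  fix G
  have L: "(\<lambda>n. RunT rb ps Y (Suc n) G) \<longlonglongrightarrow> RV rb ps Y G"
    using RV_lim[OF assms] by (rule LIMSEQ_Suc)
  show "RV rb ps Y G = (case first_in ps G of None \<Rightarrow> Y G | Some a \<Rightarrow> step rb a (RV rb ps Y) G)"
  proof (cases "first_in ps G")
    case None
    then have "(\<lambda>n. RunT rb ps Y (Suc n) G) = (\<lambda>n. Y G)" by simp
    with L have "(\<lambda>n. Y G) \<longlonglongrightarrow> RV rb ps Y G" by simp
    then have "RV rb ps Y G = Y G" using LIMSEQ_unique[OF _ tendsto_const] by blast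
    then show ?thesis using None by simp
  next
    case (Some a)
    have b1: "\<And>n G. \<bar>RunT rb ps Y n G\<bar> \<le> KK R B" by (rule RunT_bound) (rule assms)+
    have b2: "\<And>G. \<bar>RV rb ps Y G\<bar> \<le> KK R B" by (rule RV_bound) (rule assms)+
    have b3: "\<And>n G. \<bar>RunT rb ps Y n G - RV rb ps Y G\<bar> \<le> q^n * KK R B"
    proof -
      fix n G
      have "\<bar>RV rb ps Y G - RunT rb ps Y n G\<bar> \<le> q^n * KK R B" by (rule RV_approx) (rule assms)+
      then show "\<bar>RunT rb ps Y n G - RV rb ps Y G\<bar> \<le> q^n * KK R B" by (simp add: abs_minus_commute)
    qed
    have "(\<lambda>n. step rb a (RunT rb ps Y n) G) \<longlonglongrightarrow> step rb a (RV rb ps Y) G"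
    proof (rule geo_conv[where c="q * KK R B" and q=q])
      fix n
      have "\<bar>step rb a (RunT rb ps Y n) G - step rb a (RV rb ps Y) G\<bar> \<le> q * (q^n * KK R B)"
        by (rule step_diff[where Ka="KK R B" and Kb="KK R B"]) (rule b1, rule b2, rule b3)
      then show "\<bar>step rb a (RunT rb ps Y n) G - step rb a (RV rb ps Y) G\<bar> \<le> q * KK R B * q ^ n"
        by (simp add: algebra_simps)
    qed (use q_pos q_lt1 in auto)
    moreover have "(\<lambda>n. RunT rb ps Y (Suc n) G) = (\<lambda>n. step rb a (RunT rb ps Y n) G)" using Some by simp
    ultimately have "(\<lambda>n. RunT rb ps Y (Suc n) G) \<longlonglongrightarrow> step rb a (RV rb ps Y) G" by simp
    then have "RV rb ps Y G = step rb a (RV rb ps Y) G" using LIMSEQ_unique[OF L] by blast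
    then show ?thesis using Some by simp
  qed
qed

lemma RV_eq: assumes "\<And>c. \<bar>rb c\<bar> \<le> R" "\<And>G. \<bar>Y G\<bar> \<le> B"
  shows "RV rb ps Y G = (case first_in ps G of None \<Rightarrow> Y G | Some a \<Rightarrow> step rb a (RV rb ps Y) G)"
proof -
  have "FP rb ps Y (RV rb ps Y)" by (rule RV_FP) (rule assms)+
  then show ?thesis unfolding FP_def by blast
qed

lemma FP_unique: assumes "FP rb ps Y Z1" "FP rb ps Y Z2" "\<And>G. \<bar>Z1 G\<bar> \<le> Ka" "\<And>G. \<bar>Z2 G\<bar> \<le> Kb"
  shows "Z1 G = Z2 G"
proof -
  have e1: "\<And>G. Z1 G = (case first_in ps G of None \<Rightarrow> Y G | Some a \<Rightarrow> step rb a Z1 G)"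
    using assms(1) unfolding FP_def by blast
  have e2: "\<And>G. Z2 G = (case first_in ps G of None \<Rightarrow> Y G | Some a \<Rightarrow> step rb a Z2 G)"
    using assms(2) unfolding FP_def by blast
  have K0: "0 \<le> Ka + Kb" using assms(3)[of G] assms(4)[of G] by linarith
  have "\<forall>G. \<bar>Z1 G - Z2 G\<bar> \<le> q^n * (Ka + Kb)" for n
  proof (induction n)
    case 0
    show ?case
    proof
      fix G
      show "\<bar>Z1 G - Z2 G\<bar> \<le> q^0 * (Ka + Kb)"
        using abs_triangle_ineq4[of "Z1 G" "Z2 G"] assms(3)[of G] assms(4)[of G] by simp
    qed
  next
    case (Suc n)
    show ?case
    proof
      fix G
      show "\<bar>Z1 G - Z2 G\<bar> \<le> q^Suc n * (Ka + Kb)"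
      proof (cases "first_in ps G")
        case None
        have "0 \<le> q^Suc n * (Ka + Kb)" using q_pos K0 by simp
        then show ?thesis using e1[of G] e2[of G] None by simp
      next
        case (Some a)
        have "\<bar>step rb a Z1 G - step rb a Z2 G\<bar> \<le> q * (q^n * (Ka + Kb))"
          by (rule step_diff[where Ka=Ka and Kb=Kb]) (rule assms(3), rule assms(4), use Suc in blast)
        then show ?thesis using e1[of G] e2[of G] Some by (simp add: mult.assoc)
      qed
    qed
  qed
  then have "\<bar>Z1 G - Z2 G\<bar> \<le> 0" using q_pos q_lt1 by (intro le_zero_geom[where q=q and C="Ka+Kb"]) auto
  then show ?thesis by simp
qed

lemma RV_unique: assumes "\<And>c. \<bar>rb c\<bar> \<le> R" "\<And>G. \<bar>Y G\<bar> \<le> B" "FP rb ps Y Z" "\<And>G. \<bar>Z G\<bar> \<le> K"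
  shows "Z G = RV rb ps Y G"
proof -
  have f: "FP rb ps Y (RV rb ps Y)" by (rule RV_FP) (rule assms)+
  have bd: "\<And>G. \<bar>RV rb ps Y G\<bar> \<le> KK R B" by (rule RV_bound) (rule assms)+
  show ?thesis by (rule FP_unique[OF assms(3) f assms(4) bd])
qed

end


lemma ms1: "a \<in># G \<Longrightarrow> G + H - {#a#} + X = G - {#a#} + X + H"
proof -
  assume "a \<in># G"
  then obtain G' where "G = add_mset a G'" by (blast dest: multi_member_split)
  then show ?thesis by (simp add: add.commute add.left_commute)
qed

lemma ms2: "a \<in># G \<Longrightarrow> G + H - {#a#} = G - {#a#} + H"
proof -
  assume "a \<in># G"
  then obtain G' where "G = add_mset a G'" by (blast dest: multi_member_split)
  then show ?thesis by (simp add: add.commute add.left_commute)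
qed

context ct begin

lemma RunT_nonneg: assumes "\<And>c. 0 \<le> rb c" "\<And>G. first_in ps G = None \<Longrightarrow> 0 \<le> Y G"
  shows "0 \<le> RunT rb ps Y n G"
proof (induction n arbitrary: G)
  case 0 then show ?case by simp
next
  case (Suc n)
  show ?case
  proof (cases "first_in ps G")
    case None then show ?thesis using assms(2) by simp
  next
    case (Some a)
    have "0 \<le> step rb a (RunT rb ps Y n) G" by (rule step_nonneg) (use assms(1) Suc in auto)
    then show ?thesis using Some by simp
  qed
qed

lemma RV_nonneg: assumes "\<And>c. \<bar>rb c\<bar> \<le> R" "\<And>G. \<bar>Y G\<bar> \<le> B"
  "\<And>c. 0 \<le> rb c" "\<And>G. first_in ps G = None \<Longrightarrow> 0 \<le> Y G"
  shows "0 \<le> RV rb ps Y G"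
proof -
  have L: "(\<lambda>n. RunT rb ps Y n G) \<longlonglongrightarrow> RV rb ps Y G" by (rule RV_lim) (rule assms)+
  have "\<And>n. 0 \<le> RunT rb ps Y n G" by (rule RunT_nonneg) (rule assms(3), rule assms(4))
  then show ?thesis using LIMSEQ_le_const[OF L] by blast
qed

lemma RunT_mono_n: assumes "\<And>c. \<bar>rb c\<bar> \<le> R" "\<And>G. \<bar>Y G\<bar> \<le> B"
  "\<And>c. 0 \<le> rb c" "\<And>G. first_in ps G = None \<Longrightarrow> 0 \<le> Y G"
  shows "RunT rb ps Y n G \<le> RunT rb ps Y (Suc n) G"
proof (induction n arbitrary: G)
  case 0
  have "0 \<le> RunT rb ps Y (Suc 0) G" by (rule RunT_nonneg) (rule assms(3), rule assms(4))
  then show ?case by simp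
next
  case (Suc n)
  show ?case
  proof (cases "first_in ps G")
    case None then show ?thesis by simp
  next
    case (Some a)
    have b1: "\<And>n G. \<bar>RunT rb ps Y n G\<bar> \<le> KK R B" by (rule RunT_bound) (rule assms)+
    have "step rb a (RunT rb ps Y n) G \<le> step rb a (RunT rb ps Y (Suc n)) G"
      by (rule step_mono[where Ka="KK R B" and Kb="KK R B"]) (rule b1, rule b1, rule Suc)
    then show ?thesis using Some by simp
  qed
qed

lemma step_lin: assumes "\<And>G. \<bar>Za G\<bar> \<le> Ka" "\<And>G. \<bar>Zb G\<bar> \<le> Kb"
  shows "step (\<lambda>c. u * rx c + v * ry c) a (\<lambda>G. u * Za G + v * Zb G) G = u * step rx a Za G + v * step ry a Zb G"
proof -
  have "step (\<lambda>c. u * rx c + v * ry c) a (\<lambda>G. u * Za G + v * Zb G) G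
      = step (\<lambda>c. u * rx c) a (\<lambda>G. u * Za G) G + step (\<lambda>c. v * ry c) a (\<lambda>G. v * Zb G) G"
    by (rule step_add[where Ka="\<bar>u\<bar> * Ka" and Kb="\<bar>v\<bar> * Kb"]) (use assms in \<open>auto simp: abs_mult intro: mult_left_mono\<close>)
  then show ?thesis by (simp add: step_scale)
qed

lemma RV_lin: assumes "\<And>c. \<bar>rx c\<bar> \<le> Rx" "\<And>G. \<bar>Ya G\<bar> \<le> Bx" "\<And>c. \<bar>ry c\<bar> \<le> Ry" "\<And>G. \<bar>Yb G\<bar> \<le> By"
  shows "RV (\<lambda>c. u * rx c + v * ry c) ps (\<lambda>G. u * Ya G + v * Yb G) G = u * RV rx ps Ya G + v * RV ry ps Yb G"
proof -
  let ?Z = "\<lambda>G. u * RV rx ps Ya G + v * RV ry ps Yb G"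
  have b1: "\<And>G. \<bar>RV rx ps Ya G\<bar> \<le> KK Rx Bx" by (rule RV_bound) (rule assms)+
  have b2: "\<And>G. \<bar>RV ry ps Yb G\<bar> \<le> KK Ry By" by (rule RV_bound) (rule assms)+
  have e1: "\<And>G. RV rx ps Ya G = (case first_in ps G of None \<Rightarrow> Ya G | Some a \<Rightarrow> step rx a (RV rx ps Ya) G)"
    by (rule RV_eq) (rule assms)+
  have e2: "\<And>G. RV ry ps Yb G = (case first_in ps G of None \<Rightarrow> Yb G | Some a \<Rightarrow> step ry a (RV ry ps Yb) G)"
    by (rule RV_eq) (rule assms)+
  have "?Z G = RV (\<lambda>c. u * rx c + v * ry c) ps (\<lambda>G. u * Ya G + v * Yb G) G"
  proof (rule RV_unique[where R="\<bar>u\<bar> * Rx + \<bar>v\<bar> * Ry" and B="\<bar>u\<bar> * Bx + \<bar>v\<bar> * By" and K="\<bar>u\<bar> * KK Rx Bx + \<bar>v\<bar> * KK Ry By"])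
    fix c
    show "\<bar>u * rx c + v * ry c\<bar> \<le> \<bar>u\<bar> * Rx + \<bar>v\<bar> * Ry"
      using abs_triangle_ineq[of "u * rx c" "v * ry c"] mult_left_mono[OF assms(1)[of c], of "\<bar>u\<bar>"] mult_left_mono[OF assms(3)[of c], of "\<bar>v\<bar>"]
      by (simp add: abs_mult)
  next
    fix G
    show "\<bar>u * Ya G + v * Yb G\<bar> \<le> \<bar>u\<bar> * Bx + \<bar>v\<bar> * By"
      using abs_triangle_ineq[of "u * Ya G" "v * Yb G"] mult_left_mono[OF assms(2)[of G], of "\<bar>u\<bar>"] mult_left_mono[OF assms(4)[of G], of "\<bar>v\<bar>"]
      by (simp add: abs_mult)
  next
    fix G
    show "\<bar>?Z G\<bar> \<le> \<bar>u\<bar> * KK Rx Bx + \<bar>v\<bar> * KK Ry By"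
      using abs_triangle_ineq[of "u * RV rx ps Ya G" "v * RV ry ps Yb G"] mult_left_mono[OF b1[of G], of "\<bar>u\<bar>"] mult_left_mono[OF b2[of G], of "\<bar>v\<bar>"]
      by (simp add: abs_mult)
  next
    show "FP (\<lambda>c. u * rx c + v * ry c) ps (\<lambda>G. u * Ya G + v * Yb G) ?Z"
      unfolding FP_def
    proof
      fix G
      show "?Z G = (case first_in ps G of None \<Rightarrow> u * Ya G + v * Yb G | Some a \<Rightarrow> step (\<lambda>c. u * rx c + v * ry c) a ?Z G)"
      proof (cases "first_in ps G")
        case None then show ?thesis using e1[of G] e2[of G] by simp
      next
        case (Some a)
        have "step (\<lambda>c. u * rx c + v * ry c) a ?Z G = u * step rx a (RV rx ps Ya) G + v * step ry a (RV ry ps Yb) G"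
          by (rule step_lin[where Ka="KK Rx Bx" and Kb="KK Ry By"]) (rule b1, rule b2)
        then show ?thesis using e1[of G] e2[of G] Some by simp
      qed
    qed
  qed
  then show ?thesis by simp
qed

lemma RV_split: assumes "\<And>c. \<bar>rb c\<bar> \<le> R" "\<And>G. \<bar>Y G\<bar> \<le> B"
  shows "RV rb ps Y G = RV rb ps (\<lambda>_. 0) G + RV (\<lambda>_. 0) ps Y G"
proof -
  have "RV (\<lambda>c. 1 * rb c + 1 * (\<lambda>_. 0) c) ps (\<lambda>G. 1 * (\<lambda>_. 0) G + 1 * Y G) G
      = 1 * RV rb ps (\<lambda>_. 0) G + 1 * RV (\<lambda>_. 0) ps Y G"
    by (rule RV_lin[where Rx=R and Bx=0 and Ry=0 and By=B]) (use assms in auto)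
  then show ?thesis by simp
qed

lemma RV_lin0: assumes "\<And>G. \<bar>Ya G\<bar> \<le> Bx" "\<And>G. \<bar>Yb G\<bar> \<le> By"
  shows "RV (\<lambda>_. 0) ps (\<lambda>G. u * Ya G + v * Yb G) G = u * RV (\<lambda>_. 0) ps Ya G + v * RV (\<lambda>_. 0) ps Yb G"
proof -
  have "RV (\<lambda>c. u * (\<lambda>_. 0) c + v * (\<lambda>_. 0) c) ps (\<lambda>G. u * Ya G + v * Yb G) G
      = u * RV (\<lambda>_. 0) ps Ya G + v * RV (\<lambda>_. 0) ps Yb G"
    by (rule RV_lin[where Rx=0 and Bx=Bx and Ry=0 and By=By]) (use assms in auto)
  then show ?thesis by simp
qed

lemma RV_scale0: assumes "\<And>G. \<bar>Y G\<bar> \<le> B"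
  shows "RV (\<lambda>_. 0) ps (\<lambda>G. u * Y G) G = u * RV (\<lambda>_. 0) ps Y G"
  using RV_lin0[where Ya=Y and Bx=B and Yb=Y and By=B and ps=ps and u=u and v=0 and G=G] assms by simp

lemma RV_frame: assumes "\<And>c. \<bar>rb c\<bar> \<le> R" "\<And>G. \<bar>Y G\<bar> \<le> B" "\<forall>x\<in>set ps. x \<notin># H"
  shows "RV rb ps Y (G + H) = RV rb ps (\<lambda>M. Y (M + H)) G"
proof -
  let ?Z = "\<lambda>G. RV rb ps Y (G + H)"
  have e: "\<And>G. RV rb ps Y G = (case first_in ps G of None \<Rightarrow> Y G | Some a \<Rightarrow> step rb a (RV rb ps Y) G)"
    by (rule RV_eq) (rule assms)+
  have bd: "\<And>G. \<bar>RV rb ps Y G\<bar> \<le> KK R B" by (rule RV_bound) (rule assms)+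
  show ?thesis
  proof (rule RV_unique[where R=R and B=B and K="KK R B"])
    show "\<And>c. \<bar>rb c\<bar> \<le> R" by (rule assms)
    show "\<And>G. \<bar>Y (G + H)\<bar> \<le> B" by (rule assms)
    show "\<And>G. \<bar>RV rb ps Y (G + H)\<bar> \<le> KK R B" by (rule bd)
    show "FP rb ps (\<lambda>M. Y (M + H)) ?Z"
      unfolding FP_def
    proof
      fix G
      have fi: "first_in ps (G + H) = first_in ps G" by (rule fi_add) (rule assms(3))
      show "?Z G = (case first_in ps G of None \<Rightarrow> Y (G + H) | Some a \<Rightarrow> step rb a ?Z G)"
      proof (cases "first_in ps G")
        case None then show ?thesis using e[of "G + H"] fi by simp
      next
        case (Some a)
        then have aG: "a \<in># G" using fi_Some by blast
        have "step rb a (RV rb ps Y) (G + H) = step rb a ?Z G"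
          by (rule step_cong) (simp_all add: ms1[OF aG] ms2[OF aG] add_ac)
        then show ?thesis using e[of "G + H"] fi Some by simp
      qed
    qed
  qed
qed

lemma RV_EE: assumes "\<And>x M. \<bar>g x M\<bar> \<le> C"
  shows "RV (\<lambda>_. 0) ps (\<lambda>M. EE P (\<lambda>x. g x M)) H = EE P (\<lambda>x. RV (\<lambda>_. 0) ps (g x) H)"
proof -
  let ?Z = "\<lambda>H. EE P (\<lambda>x. RV (\<lambda>_. 0) ps (g x) H)"
  have z0: "\<And>c. \<bar>(\<lambda>_. 0::real) c\<bar> \<le> 0" by simp
  have e: "\<And>x G. RV (\<lambda>_. 0) ps (g x) G = (case first_in ps G of None \<Rightarrow> g x G | Some a \<Rightarrow> step (\<lambda>_. 0) a (RV (\<lambda>_. 0) ps (g x)) G)"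
    by (rule RV_eq[where R=0 and B=C]) (simp, rule assms)
  have bd: "\<And>x G. \<bar>RV (\<lambda>_. 0) ps (g x) G\<bar> \<le> KK 0 C"
    by (rule RV_bound[where R=0 and B=C]) (simp, rule assms)
  have "?Z H = RV (\<lambda>_. 0) ps (\<lambda>M. EE P (\<lambda>x. g x M)) H"
  proof (rule RV_unique[where R=0 and B=C and K="KK 0 C"])
    show "\<And>c. \<bar>(\<lambda>_. 0::real) c\<bar> \<le> 0" by simp
    show "\<And>G. \<bar>EE P (\<lambda>x. g x G)\<bar> \<le> C" by (rule EE_bnd) (rule assms)
    show "\<And>G. \<bar>?Z G\<bar> \<le> KK 0 C" by (rule EE_bnd) (rule bd)
    show "FP (\<lambda>_. 0) ps (\<lambda>M. EE P (\<lambda>x. g x M)) ?Z"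
      unfolding FP_def
    proof
      fix G
      show "?Z G = (case first_in ps G of None \<Rightarrow> EE P (\<lambda>x. g x G) | Some a \<Rightarrow> step (\<lambda>_. 0) a ?Z G)"
      proof (cases "first_in ps G")
        case None then show ?thesis using e[of _ G] by simp
      next
        case (Some a)
        let ?A = "\<lambda>x. EE (D (snd a)) (\<lambda>M. RV (\<lambda>_. 0) ps (g x) (G - {#a#} + children a M))"
        let ?B = "\<lambda>x. RV (\<lambda>_. 0) ps (g x) (G - {#a#})"
        have "\<And>x. RV (\<lambda>_. 0) ps (g x) G = (p a * q) * ?A x + ((1 - p a) * q) * ?B x"
          using e[of _ G] Some unfolding step_def by (simp add: algebra_simps)
        then have "?Z G = EE P (\<lambda>x. (p a * q) * ?A x + ((1 - p a) * q) * ?B x)" by simp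
        also have "\<dots> = (p a * q) * EE P ?A + ((1 - p a) * q) * EE P ?B"
          by (rule EE_lin[where B="KK 0 C" and C="KK 0 C"]) (rule EE_bnd, rule bd, rule bd)
        also have "EE P ?A = EE (D (snd a)) (\<lambda>M. ?Z (G - {#a#} + children a M))"
          by (rule EE_fub[where B="KK 0 C"]) (rule bd)
        finally show ?thesis using Some unfolding step_def by (simp add: algebra_simps)
      qed
    qed
  qed
  then show ?thesis by simp
qed

lemma RV_comm: assumes "\<And>M M'. \<bar>f M M'\<bar> \<le> C"
  shows "RV (\<lambda>_. 0) ps (\<lambda>M. RV (\<lambda>_. 0) ps (\<lambda>M'. f M M') H) G = RV (\<lambda>_. 0) ps (\<lambda>M'. RV (\<lambda>_. 0) ps (\<lambda>M. f M M') G) H"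
proof -
  let ?Z = "\<lambda>G. RV (\<lambda>_. 0) ps (\<lambda>M'. RV (\<lambda>_. 0) ps (\<lambda>M. f M M') G) H"
  have e1: "\<And>M' G. RV (\<lambda>_. 0) ps (\<lambda>M. f M M') G = (case first_in ps G of None \<Rightarrow> f G M' | Some a \<Rightarrow> step (\<lambda>_. 0) a (RV (\<lambda>_. 0) ps (\<lambda>M. f M M')) G)"
    by (rule RV_eq[where R=0 and B=C]) (simp, rule assms)
  have bd1: "\<And>M' G. \<bar>RV (\<lambda>_. 0) ps (\<lambda>M. f M M') G\<bar> \<le> KK 0 C"
    by (rule RV_bound[where R=0 and B=C]) (simp, rule assms)
  have bd1': "\<And>M G. \<bar>RV (\<lambda>_. 0) ps (\<lambda>M'. f M M') G\<bar> \<le> KK 0 C"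
    by (rule RV_bound[where R=0 and B=C]) (simp, rule assms)
  have bd2: "\<And>G. \<bar>?Z G\<bar> \<le> KK 0 (KK 0 C)"
    by (rule RV_bound[where R=0 and B="KK 0 C"]) (simp, rule bd1)
  have "?Z G = RV (\<lambda>_. 0) ps (\<lambda>M. RV (\<lambda>_. 0) ps (\<lambda>M'. f M M') H) G"
  proof (rule RV_unique[where R=0 and B="KK 0 C" and K="KK 0 (KK 0 C)"])
    show "\<And>c. \<bar>(\<lambda>_. 0::real) c\<bar> \<le> 0" by simp
    show "\<And>G. \<bar>RV (\<lambda>_. 0) ps (\<lambda>M'. f G M') H\<bar> \<le> KK 0 C" by (rule bd1')
    show "\<And>G. \<bar>?Z G\<bar> \<le> KK 0 (KK 0 C)" by (rule bd2)
    show "FP (\<lambda>_. 0) ps (\<lambda>M. RV (\<lambda>_. 0) ps (\<lambda>M'. f M M') H) ?Z"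
      unfolding FP_def
    proof
      fix G
      show "?Z G = (case first_in ps G of None \<Rightarrow> RV (\<lambda>_. 0) ps (\<lambda>M'. f G M') H | Some a \<Rightarrow> step (\<lambda>_. 0) a ?Z G)"
      proof (cases "first_in ps G")
        case None
        then have "(\<lambda>M'. RV (\<lambda>_. 0) ps (\<lambda>M. f M M') G) = (\<lambda>M'. f G M')" using e1 by simp
        then show ?thesis using None by simp
      next
        case (Some a)
        let ?h = "\<lambda>d M'. RV (\<lambda>_. 0) ps (\<lambda>M. f M M') (G - {#a#} + children a d)"
        let ?hz = "\<lambda>M'. RV (\<lambda>_. 0) ps (\<lambda>M. f M M') (G - {#a#})"
        have "(\<lambda>M'. RV (\<lambda>_. 0) ps (\<lambda>M. f M M') G) = (\<lambda>M'. (p a * q) * EE (D (snd a)) (\<lambda>d. ?h d M') + ((1 - p a) * q) * ?hz M')"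
          using e1 Some unfolding step_def by (simp add: algebra_simps)
        then have "?Z G = RV (\<lambda>_. 0) ps (\<lambda>M'. (p a * q) * EE (D (snd a)) (\<lambda>d. ?h d M') + ((1 - p a) * q) * ?hz M') H"
          by simp
        also have "\<dots> = (p a * q) * RV (\<lambda>_. 0) ps (\<lambda>M'. EE (D (snd a)) (\<lambda>d. ?h d M')) H + ((1 - p a) * q) * RV (\<lambda>_. 0) ps ?hz H"
          by (rule RV_lin0[where Bx="KK 0 C" and By="KK 0 C"]) (rule EE_bnd, rule bd1, rule bd1)
        also have "RV (\<lambda>_. 0) ps (\<lambda>M'. EE (D (snd a)) (\<lambda>d. ?h d M')) H = EE (D (snd a)) (\<lambda>d. RV (\<lambda>_. 0) ps (?h d) H)"
          by (rule RV_EE[where C="KK 0 C"]) (rule bd1)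
        finally show ?thesis using Some unfolding step_def by (simp add: algebra_simps)
      qed
    qed
  qed
  then show ?thesis by simp
qed

end


lemma ms_diff_assoc: "x \<in># X \<Longrightarrow> A + X - {#x#} = A + (X - {#x#})"
proof -
  assume "x \<in># X"
  then obtain X' where "X = add_mset x X'" by (blast dest: multi_member_split)
  then show ?thesis by simp
qed

abbreviation nops :: "'a list \<Rightarrow> 'a multiset \<Rightarrow> bool" where
  "nops S G \<equiv> \<forall>x\<in>set S. x \<notin># G"

lemma nops_fi: "nops S G \<longleftrightarrow> first_in S G = None" by (simp add: fi_None)

context ct begin

lemma KK0: "KK 0 B = B" unfolding KK_def by simp

lemma b_bnd: "\<bar>b c\<bar> \<le> 1" using b01[of c] by simp

lemma z_bnd: "\<bar>(\<lambda>_. 0::real) c\<bar> \<le> 0" by simp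

lemma RV0_bound: assumes "\<And>G. \<bar>Y G\<bar> \<le> B" shows "\<bar>RV (\<lambda>_. 0) ps Y G\<bar> \<le> B"
proof -
  have "\<bar>RV (\<lambda>_. 0) ps Y G\<bar> \<le> KK 0 B" by (rule RV_bound[where R=0]) (simp, rule assms)
  then show ?thesis by (simp add: KK0)
qed

definition W :: "'c ntype list \<Rightarrow> 'c frontier \<Rightarrow> real" where "W \<sigma> = RV b \<sigma> (\<lambda>_. 0)"
definition Qv :: "'c ntype list \<Rightarrow> 'c frontier \<Rightarrow> 'c ntype \<Rightarrow> real" where "Qv \<sigma> G j = step b j (W \<sigma>) G"
definition Blk :: "('c \<Rightarrow> real) \<Rightarrow> 'c ntype \<Rightarrow> 'c ntype list \<Rightarrow> ('c frontier \<Rightarrow> real) \<Rightarrow> real" where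
  "Blk rb c S Y = step rb c (RV rb S Y) {#c#}"
definition Gm :: "'c ntype \<Rightarrow> 'c ntype list \<Rightarrow> ('c frontier \<Rightarrow> real) \<Rightarrow> real" where
  "Gm c S Y = Blk (\<lambda>_. 0) c S Y"
definition Rr :: "'c ntype \<Rightarrow> 'c ntype list \<Rightarrow> real" where "Rr c S = Blk b c S (\<lambda>_. 0)"
definition gam :: "'c ntype \<Rightarrow> 'c ntype list \<Rightarrow> real" where "gam c S = Gm c S (\<lambda>_. 1)"

definition Kw :: real where "Kw = KK 1 0"

lemma W_bound: "\<bar>W \<sigma> G\<bar> \<le> Kw"
  unfolding W_def Kw_def by (rule RV_bound) (rule b_bnd, simp)

lemma W_nonneg: "0 \<le> W \<sigma> G"
  unfolding W_def by (rule RV_nonneg[where R=1 and B=0]) (use b01 b_bnd in auto)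

lemma W_eq: "W \<sigma> G = (case first_in \<sigma> G of None \<Rightarrow> 0 | Some a \<Rightarrow> step b a (W \<sigma>) G)"
  unfolding W_def by (rule RV_eq[where R=1 and B=0]) (rule b_bnd, simp)

lemma Qv_bound: "\<bar>Qv \<sigma> G j\<bar> \<le> 1 + q * Kw"
  unfolding Qv_def by (rule step_bound) (rule b_bnd, rule W_bound)

lemma W_unroll: "RV b (take k \<sigma>) (W \<sigma>) G = W \<sigma> G"
proof -
  have "W \<sigma> G = RV b (take k \<sigma>) (W \<sigma>) G"
  proof (rule RV_unique[where R=1 and B=Kw and K=Kw])
    show "\<And>c. \<bar>b c\<bar> \<le> 1" by (rule b_bnd)
    show "\<And>G. \<bar>W \<sigma> G\<bar> \<le> Kw" by (rule W_bound)
    show "\<And>G. \<bar>W \<sigma> G\<bar> \<le> Kw" by (rule W_bound)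
    show "FP b (take k \<sigma>) (W \<sigma>) (W \<sigma>)"
      unfolding FP_def
    proof
      fix G
      show "W \<sigma> G = (case first_in (take k \<sigma>) G of None \<Rightarrow> W \<sigma> G | Some a \<Rightarrow> step b a (W \<sigma>) G)"
      proof (cases "first_in (take k \<sigma>) G")
        case None then show ?thesis by simp
      next
        case (Some a)
        then have "first_in \<sigma> G = Some a" by (rule fi_prefix)
        then show ?thesis using Some W_eq[of \<sigma> G] by simp
      qed
    qed
  qed
  then show ?thesis by simp
qed

lemma W_unroll_fun: "RV b (take k \<sigma>) (W \<sigma>) = W \<sigma>"
  using W_unroll by blast

lemma Blk_rep: assumes "\<And>c. \<bar>rb c\<bar> \<le> R" "\<And>G. \<bar>Y G\<bar> \<le> B" "nops S G" "c \<in># G"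
  shows "step rb c (RV rb S Y) G = Blk rb c S (\<lambda>M. Y (M + (G - {#c#})))"
proof -
  have H: "nops S (G - {#c#})" using assms(3) by (auto dest: in_diffD)
  have fr: "\<And>X. RV rb S Y (X + (G - {#c#})) = RV rb S (\<lambda>M. Y (M + (G - {#c#}))) X"
    by (rule RV_frame) (rule assms(1), rule assms(2), rule H)
  show ?thesis unfolding Blk_def
  proof (rule step_cong)
    fix M
    show "RV rb S Y (G - {#c#} + children c M) = RV rb S (\<lambda>M. Y (M + (G - {#c#}))) ({#c#} - {#c#} + children c M)"
      using fr[of "children c M"] by (simp add: add.commute)
  next
    show "RV rb S Y (G - {#c#}) = RV rb S (\<lambda>M. Y (M + (G - {#c#}))) ({#c#} - {#c#})"
      using fr[of "{#}"] by simp
  qed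
qed

lemma Blk_split: assumes "\<And>G. \<bar>Y G\<bar> \<le> B"
  shows "Blk b c S Y = Rr c S + Gm c S Y"
proof -
  have e0: "\<And>G. RV b S Y G = RV b S (\<lambda>_. 0) G + RV (\<lambda>_. 0) S Y G"
    by (rule RV_split[where R=1 and B=B]) (rule b_bnd, rule assms)
  have e: "RV b S Y = (\<lambda>G. RV b S (\<lambda>_. 0) G + RV (\<lambda>_. 0) S Y G)"
    by (intro ext) (rule e0)
  have b1: "\<And>G. \<bar>RV b S (\<lambda>_. 0) G\<bar> \<le> KK 1 0" by (rule RV_bound) (rule b_bnd, simp)
  have b2: "\<And>G. \<bar>RV (\<lambda>_. 0) S Y G\<bar> \<le> B" by (rule RV0_bound) (rule assms)
  have "step (\<lambda>c. b c + (\<lambda>_. 0) c) c (\<lambda>G. RV b S (\<lambda>_. 0) G + RV (\<lambda>_. 0) S Y G) {#c#}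
     = step b c (RV b S (\<lambda>_. 0)) {#c#} + step (\<lambda>_. 0) c (RV (\<lambda>_. 0) S Y) {#c#}"
    by (rule step_add[where Ka="KK 1 0" and Kb=B]) (rule b1, rule b2)
  then show ?thesis unfolding Blk_def Rr_def Gm_def e by simp
qed

lemma Gm_expand: "Gm c S Y = (p c * q) * EE (D (snd c)) (\<lambda>d. RV (\<lambda>_. 0) S Y (children c d)) + ((1 - p c) * q) * RV (\<lambda>_. 0) S Y {#}"
  unfolding Gm_def Blk_def step_def by (simp add: algebra_simps)

lemma Gm_lin: assumes "\<And>G. \<bar>Ya G\<bar> \<le> Bx" "\<And>G. \<bar>Yb G\<bar> \<le> By"
  shows "Gm c S (\<lambda>M. u * Ya M + v * Yb M) = u * Gm c S Ya + v * Gm c S Yb"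
proof -
  have e0: "\<And>G. RV (\<lambda>_. 0) S (\<lambda>M. u * Ya M + v * Yb M) G = u * RV (\<lambda>_. 0) S Ya G + v * RV (\<lambda>_. 0) S Yb G"
    by (rule RV_lin0[where Bx=Bx and By=By]) (rule assms)+
  have e: "RV (\<lambda>_. 0) S (\<lambda>M. u * Ya M + v * Yb M) = (\<lambda>G. u * RV (\<lambda>_. 0) S Ya G + v * RV (\<lambda>_. 0) S Yb G)"
    by (intro ext) (rule e0)
  have b1: "\<And>G. \<bar>RV (\<lambda>_. 0) S Ya G\<bar> \<le> Bx" by (rule RV0_bound) (rule assms)
  have b2: "\<And>G. \<bar>RV (\<lambda>_. 0) S Yb G\<bar> \<le> By" by (rule RV0_bound) (rule assms)
  have "step (\<lambda>c. u * (\<lambda>_. 0) c + v * (\<lambda>_. 0) c) c (\<lambda>G. u * RV (\<lambda>_. 0) S Ya G + v * RV (\<lambda>_. 0) S Yb G) {#c#}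
      = u * step (\<lambda>_. 0) c (RV (\<lambda>_. 0) S Ya) {#c#} + v * step (\<lambda>_. 0) c (RV (\<lambda>_. 0) S Yb) {#c#}"
    by (rule step_lin[where Ka=Bx and Kb=By]) (rule b1, rule b2)
  then show ?thesis unfolding Gm_def Blk_def e by simp
qed

lemma Gm_bound: assumes "\<And>G. \<bar>Y G\<bar> \<le> B" shows "\<bar>Gm c S Y\<bar> \<le> q * B"
proof -
  have "\<bar>step (\<lambda>_. 0) c (RV (\<lambda>_. 0) S Y) {#c#}\<bar> \<le> 0 + q * B"
    by (rule step_bound) (simp, rule RV0_bound, rule assms)
  then show ?thesis unfolding Gm_def Blk_def by simp
qed

lemma Gm_const: "Gm c S (\<lambda>_. x) = x * gam c S"
proof -
  have "Gm c S (\<lambda>M. x * (\<lambda>_. 1) M + 0 * (\<lambda>_. 1) M) = x * Gm c S (\<lambda>_. 1) + 0 * Gm c S (\<lambda>_. 1)"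
    by (rule Gm_lin[where Bx=1 and By=1]) simp_all
  then show ?thesis unfolding gam_def by simp
qed

lemma gam_bounds: "0 \<le> gam c S" "gam c S \<le> q"
proof -
  have "0 \<le> step (\<lambda>_. 0) c (RV (\<lambda>_. 0) S (\<lambda>_. 1)) {#c#}"
    by (rule step_nonneg) (simp, rule RV_nonneg[where R=0 and B=1], simp_all)
  then show "0 \<le> gam c S" unfolding gam_def Gm_def Blk_def .
  have "\<bar>gam c S\<bar> \<le> q * 1" unfolding gam_def by (rule Gm_bound) simp
  then show "gam c S \<le> q" by simp
qed

lemma Gm_nonneg: assumes "\<And>G. \<bar>Y G\<bar> \<le> B" "\<And>M. nops S M \<Longrightarrow> 0 \<le> Y M"
  shows "0 \<le> Gm c S Y"
proof -
  have "0 \<le> step (\<lambda>_. 0) c (RV (\<lambda>_. 0) S Y) {#c#}"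
  proof (rule step_nonneg)
    show "\<And>c. 0 \<le> (\<lambda>_. 0::real) c" by simp
    fix G show "0 \<le> RV (\<lambda>_. 0) S Y G"
      by (rule RV_nonneg[where R=0 and B=B]) (simp, rule assms(1), simp, use assms(2) nops_fi in blast)
  qed
  then show ?thesis unfolding Gm_def Blk_def .
qed

lemma Gm_mono: assumes "\<And>G. \<bar>Ya G\<bar> \<le> Bx" "\<And>G. \<bar>Yb G\<bar> \<le> By" "\<And>M. nops S M \<Longrightarrow> Ya M \<le> Yb M"
  shows "Gm c S Ya \<le> Gm c S Yb"
proof -
  have "Gm c S (\<lambda>M. 1 * Yb M + (-1) * Ya M) = 1 * Gm c S Yb + (-1) * Gm c S Ya"
    by (rule Gm_lin[where Bx=By and By=Bx]) (rule assms(2), rule assms(1))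
  moreover have "0 \<le> Gm c S (\<lambda>M. 1 * Yb M + (-1) * Ya M)"
  proof (rule Gm_nonneg[where B="By + Bx"])
    fix G show "\<bar>1 * Yb G + (-1) * Ya G\<bar> \<le> By + Bx" using assms(1)[of G] assms(2)[of G] by linarith
  next
    fix M assume "nops S M" then show "0 \<le> 1 * Yb M + (-1) * Ya M" using assms(3) by simp
  qed
  ultimately show ?thesis by simp
qed

lemma Gm_cong: assumes "\<And>G. \<bar>Ya G\<bar> \<le> Bx" "\<And>G. \<bar>Yb G\<bar> \<le> By" "\<And>M. nops S M \<Longrightarrow> Ya M = Yb M"
  shows "Gm c S Ya = Gm c S Yb"
  using Gm_mono[where Ya=Ya and Yb=Yb, OF assms(1,2)] Gm_mono[where Ya=Yb and Yb=Ya, OF assms(2,1)] assms(3)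
  by (simp add: order_antisym)

lemma RV_Gm: assumes "\<And>M M'. \<bar>f M M'\<bar> \<le> C"
  shows "RV (\<lambda>_. 0) S (\<lambda>M. Gm j S (\<lambda>M'. f M M')) G = Gm j S (\<lambda>M'. RV (\<lambda>_. 0) S (\<lambda>M. f M M') G)"
proof -
  let ?A = "\<lambda>M. EE (D (snd j)) (\<lambda>d. RV (\<lambda>_. 0) S (\<lambda>M'. f M M') (children j d))"
  let ?B = "\<lambda>M. RV (\<lambda>_. 0) S (\<lambda>M'. f M M') {#}"
  have bR: "\<And>M G. \<bar>RV (\<lambda>_. 0) S (\<lambda>M'. f M M') G\<bar> \<le> C" by (rule RV0_bound) (rule assms)
  have bR': "\<And>M' G. \<bar>RV (\<lambda>_. 0) S (\<lambda>M. f M M') G\<bar> \<le> C" by (rule RV0_bound) (rule assms)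
  have "(\<lambda>M. Gm j S (\<lambda>M'. f M M')) = (\<lambda>M. (p j * q) * ?A M + ((1 - p j) * q) * ?B M)"
    by (simp add: Gm_expand)
  then have "RV (\<lambda>_. 0) S (\<lambda>M. Gm j S (\<lambda>M'. f M M')) G = RV (\<lambda>_. 0) S (\<lambda>M. (p j * q) * ?A M + ((1 - p j) * q) * ?B M) G"
    by simp
  also have "\<dots> = (p j * q) * RV (\<lambda>_. 0) S ?A G + ((1 - p j) * q) * RV (\<lambda>_. 0) S ?B G"
    by (rule RV_lin0[where Bx=C and By=C]) (rule EE_bnd, rule bR, rule bR)
  also have "RV (\<lambda>_. 0) S ?A G = EE (D (snd j)) (\<lambda>d. RV (\<lambda>_. 0) S (\<lambda>M. RV (\<lambda>_. 0) S (\<lambda>M'. f M M') (children j d)) G)"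
    by (rule RV_EE[where C=C]) (rule bR)
  also have "(\<lambda>d. RV (\<lambda>_. 0) S (\<lambda>M. RV (\<lambda>_. 0) S (\<lambda>M'. f M M') (children j d)) G)
      = (\<lambda>d. RV (\<lambda>_. 0) S (\<lambda>M'. RV (\<lambda>_. 0) S (\<lambda>M. f M M') G) (children j d))"
    using RV_comm[where f=f and C=C, OF assms] by blast
  also have "RV (\<lambda>_. 0) S ?B G = RV (\<lambda>_. 0) S (\<lambda>M'. RV (\<lambda>_. 0) S (\<lambda>M. f M M') G) {#}"
    using RV_comm[where f=f and C=C, OF assms] by blast
  finally show ?thesis by (simp add: Gm_expand)
qed

lemma EE_Gm: assumes "\<And>x M. \<bar>g x M\<bar> \<le> C"
  shows "EE P (\<lambda>x. Gm j S (g x)) = Gm j S (\<lambda>M'. EE P (\<lambda>x. g x M'))"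
proof -
  let ?A = "\<lambda>x. EE (D (snd j)) (\<lambda>d. RV (\<lambda>_. 0) S (g x) (children j d))"
  let ?B = "\<lambda>x. RV (\<lambda>_. 0) S (g x) {#}"
  have bR: "\<And>x G. \<bar>RV (\<lambda>_. 0) S (g x) G\<bar> \<le> C" by (rule RV0_bound) (rule assms)
  have "EE P (\<lambda>x. Gm j S (g x)) = EE P (\<lambda>x. (p j * q) * ?A x + ((1 - p j) * q) * ?B x)"
    by (simp add: Gm_expand)
  also have "\<dots> = (p j * q) * EE P ?A + ((1 - p j) * q) * EE P ?B"
    by (rule EE_lin[where B=C and C=C]) (rule EE_bnd, rule bR, rule bR)
  also have "EE P ?A = EE (D (snd j)) (\<lambda>d. EE P (\<lambda>x. RV (\<lambda>_. 0) S (g x) (children j d)))"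
    by (rule EE_fub[where B=C]) (rule bR)
  also have "(\<lambda>d. EE P (\<lambda>x. RV (\<lambda>_. 0) S (g x) (children j d))) = (\<lambda>d. RV (\<lambda>_. 0) S (\<lambda>M'. EE P (\<lambda>x. g x M')) (children j d))"
    using RV_EE[where g=g and C=C, OF assms] by simp
  also have "EE P ?B = RV (\<lambda>_. 0) S (\<lambda>M'. EE P (\<lambda>x. g x M')) {#}"
    using RV_EE[where g=g and C=C, OF assms] by simp
  finally show ?thesis by (simp add: Gm_expand)
qed

lemma Gm_comm: assumes "\<And>M M'. \<bar>f M M'\<bar> \<le> C"
  shows "Gm c S (\<lambda>M. Gm j S (\<lambda>M'. f M M')) = Gm j S (\<lambda>M'. Gm c S (\<lambda>M. f M M'))"
proof -
  let ?h = "\<lambda>G M'. RV (\<lambda>_. 0) S (\<lambda>M. f M M') G"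
  have bR': "\<And>M' G. \<bar>RV (\<lambda>_. 0) S (\<lambda>M. f M M') G\<bar> \<le> C" by (rule RV0_bound) (rule assms)
  have "Gm c S (\<lambda>M. Gm j S (\<lambda>M'. f M M'))
     = (p c * q) * EE (D (snd c)) (\<lambda>d. RV (\<lambda>_. 0) S (\<lambda>M. Gm j S (\<lambda>M'. f M M')) (children c d))
       + ((1 - p c) * q) * RV (\<lambda>_. 0) S (\<lambda>M. Gm j S (\<lambda>M'. f M M')) {#}"
    by (rule Gm_expand)
  also have "(\<lambda>d. RV (\<lambda>_. 0) S (\<lambda>M. Gm j S (\<lambda>M'. f M M')) (children c d)) = (\<lambda>d. Gm j S (?h (children c d)))"
    using RV_Gm[where f=f and C=C, OF assms] by simp
  also have "RV (\<lambda>_. 0) S (\<lambda>M. Gm j S (\<lambda>M'. f M M')) {#} = Gm j S (?h {#})"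
    using RV_Gm[where f=f and C=C, OF assms] by simp
  also have "EE (D (snd c)) (\<lambda>d. Gm j S (?h (children c d))) = Gm j S (\<lambda>M'. EE (D (snd c)) (\<lambda>d. ?h (children c d) M'))"
    by (rule EE_Gm[where C=C]) (rule bR')
  also have "(p c * q) * Gm j S (\<lambda>M'. EE (D (snd c)) (\<lambda>d. ?h (children c d) M')) + ((1 - p c) * q) * Gm j S (?h {#})
      = Gm j S (\<lambda>M'. (p c * q) * EE (D (snd c)) (\<lambda>d. ?h (children c d) M') + ((1 - p c) * q) * ?h {#} M')"
    by (rule Gm_lin[symmetric, where Bx=C and By=C]) (rule EE_bnd, rule bR', rule bR')
  also have "(\<lambda>M'. (p c * q) * EE (D (snd c)) (\<lambda>d. ?h (children c d) M') + ((1 - p c) * q) * ?h {#} M')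
      = (\<lambda>M'. Gm c S (\<lambda>M. f M M'))"
    by (simp add: Gm_expand)
  finally show ?thesis .
qed

end


lemma cross_mult: fixes a c x y :: real assumes "0 < x" "0 < y" "a / x \<le> c / y" shows "a * y \<le> c * x"
proof -
  have "a / x * (x * y) \<le> c / y * (x * y)" by (rule mult_right_mono[OF assms(3)]) (use assms in simp)
  moreover have "a / x * (x * y) = a * y" using assms(1) by simp
  moreover have "c / y * (x * y) = c * x" using assms(2) by simp
  ultimately show ?thesis by simp
qed

context ct begin

lemma exp_Suc: "exp (- \<beta> * real (Suc s)) = exp (- \<beta> * real s) * q"
proof -
  have "exp (- \<beta> * real (Suc s)) = exp (- \<beta> * real s + - \<beta>)"
    by (rule arg_cong[where f=exp]) (simp add: algebra_simps)
  also have "\<dots> = exp (- \<beta> * real s) * exp (- \<beta>)" by (rule exp_add)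
  finally show ?thesis by (simp add: q_def)
qed

lemma step_lim: assumes "\<And>c. \<bar>rb c\<bar> \<le> R" "\<And>G. \<bar>Y G\<bar> \<le> B"
  shows "(\<lambda>n. step rb a (RunT rb ps Y n) G) \<longlonglongrightarrow> step rb a (RV rb ps Y) G"
proof -
  have b1: "\<And>n G. \<bar>RunT rb ps Y n G\<bar> \<le> KK R B" by (rule RunT_bound) (rule assms)+
  have b2: "\<And>G. \<bar>RV rb ps Y G\<bar> \<le> KK R B" by (rule RV_bound) (rule assms)+
  have b3: "\<And>n G. \<bar>RunT rb ps Y n G - RV rb ps Y G\<bar> \<le> q^n * KK R B"
  proof -
    fix n G
    have "\<bar>RV rb ps Y G - RunT rb ps Y n G\<bar> \<le> q^n * KK R B" by (rule RV_approx) (rule assms)+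
    then show "\<bar>RunT rb ps Y n G - RV rb ps Y G\<bar> \<le> q^n * KK R B" by (simp add: abs_minus_commute)
  qed
  show ?thesis
  proof (rule geo_conv[where c="q * KK R B" and q=q])
    fix n
    have "\<bar>step rb a (RunT rb ps Y n) G - step rb a (RV rb ps Y) G\<bar> \<le> q * (q^n * KK R B)"
      by (rule step_diff[where Ka="KK R B" and Kb="KK R B"]) (rule b1, rule b2, rule b3)
    then show "\<bar>step rb a (RunT rb ps Y n) G - step rb a (RV rb ps Y) G\<bar> \<le> q * KK R B * q ^ n"
      by (simp add: algebra_simps)
  qed (use q_pos q_lt1 in auto)
qed

lemma PRn_s: "1 \<le> s \<Longrightarrow> PRn p b D \<beta> n (period_ch c S) G s = exp (- \<beta> * real s) * RunT b S (\<lambda>_. 0) n G"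
proof (induction n arbitrary: G s)
  case 0 then show ?case by simp
next
  case (Suc n)
  have ch: "period_ch c S s G = first_in S G" using Suc.prems by (simp add: period_ch_def)
  show ?case
  proof (cases "first_in S G")
    case None then show ?thesis using ch by simp
  next
    case (Some ty)
    have IH: "\<And>X. PRn p b D \<beta> n (period_ch c S) X (Suc s) = exp (- \<beta> * real s) * q * RunT b S (\<lambda>_. 0) n X"
    proof -
      fix X
      have "PRn p b D \<beta> n (period_ch c S) X (Suc s) = exp (- \<beta> * real (Suc s)) * RunT b S (\<lambda>_. 0) n X" by (rule Suc.IH) simp
      then show "PRn p b D \<beta> n (period_ch c S) X (Suc s) = exp (- \<beta> * real s) * q * RunT b S (\<lambda>_. 0) n X" by (simp only: exp_Suc)
    qed
    show ?thesis using ch Some by (simp add: Let_def IH step_def algebra_simps)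
  qed
qed

lemma PR0: "PRn p b D \<beta> (Suc n) (period_ch c S) {#c#} 0 = step b c (RunT b S (\<lambda>_. 0) n) {#c#}"
proof -
  have IH: "\<And>X. PRn p b D \<beta> n (period_ch c S) X (Suc 0) = q * RunT b S (\<lambda>_. 0) n X"
    using PRn_s[of 1 n c S] exp_Suc[of 0] by simp
  show ?thesis by (simp add: period_ch_def Let_def IH step_def algebra_simps)
qed

lemma PGn_s: "1 \<le> s \<Longrightarrow> PGn p D \<beta> n (period_ch c S) G s = exp (- \<beta> * real s) * RunT (\<lambda>_. 0) S (\<lambda>_. 1) n G"
proof (induction n arbitrary: G s)
  case 0 then show ?case by simp
next
  case (Suc n)
  have ch: "period_ch c S s G = first_in S G" using Suc.prems by (simp add: period_ch_def)
  show ?case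
  proof (cases "first_in S G")
    case None then show ?thesis using ch by simp
  next
    case (Some ty)
    have IH: "\<And>X. PGn p D \<beta> n (period_ch c S) X (Suc s) = exp (- \<beta> * real s) * q * RunT (\<lambda>_. 0) S (\<lambda>_. 1) n X"
    proof -
      fix X
      have "PGn p D \<beta> n (period_ch c S) X (Suc s) = exp (- \<beta> * real (Suc s)) * RunT (\<lambda>_. 0) S (\<lambda>_. 1) n X" by (rule Suc.IH) simp
      then show "PGn p D \<beta> n (period_ch c S) X (Suc s) = exp (- \<beta> * real s) * q * RunT (\<lambda>_. 0) S (\<lambda>_. 1) n X" by (simp only: exp_Suc)
    qed
    show ?thesis using ch Some by (simp add: Let_def IH step_def algebra_simps)
  qed
qed

lemma PG0: "PGn p D \<beta> (Suc n) (period_ch c S) {#c#} 0 = step (\<lambda>_. 0) c (RunT (\<lambda>_. 0) S (\<lambda>_. 1) n) {#c#}"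
proof -
  have IH: "\<And>X. PGn p D \<beta> n (period_ch c S) X (Suc 0) = q * RunT (\<lambda>_. 0) S (\<lambda>_. 1) n X"
    using PGn_s[of 1 n c S] exp_Suc[of 0] by simp
  show ?thesis by (simp add: period_ch_def Let_def IH step_def algebra_simps)
qed

lemma SUP_shift: fixes X :: "nat \<Rightarrow> real"
  assumes "X 0 = 0" "\<And>n. X (Suc n) = Z n" "\<And>n. 0 \<le> Z n" "\<And>n. Z n \<le> Z (Suc n)" "Z \<longlonglongrightarrow> L"
  shows "(SUP n. X n) = L"
proof (rule incseq_SUP_lim)
  show "incseq X"
  proof (rule incseq_SucI)
    fix n show "X n \<le> X (Suc n)" using assms by (cases n) auto
  qed
  have "(\<lambda>n. X (Suc n)) \<longlonglongrightarrow> L" using assms(2,5) by simp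
  then show "X \<longlonglongrightarrow> L" by (simp add: filterlim_sequentially_Suc)
qed

lemma period_r_eq: "period_r p b D \<beta> c S = Rr c S"
proof -
  have bz: "\<And>G. \<bar>(\<lambda>_. 0::real) G\<bar> \<le> 0" by simp
  have b1: "\<And>n G. \<bar>RunT b S (\<lambda>_. 0) n G\<bar> \<le> KK 1 0" by (rule RunT_bound) (rule b_bnd, simp)
  have "(SUP n. PRn p b D \<beta> n (period_ch c S) {#c#} 0) = step b c (RV b S (\<lambda>_. 0)) {#c#}"
  proof (rule SUP_shift[where Z="\<lambda>n. step b c (RunT b S (\<lambda>_. 0) n) {#c#}"])
    show "PRn p b D \<beta> 0 (period_ch c S) {#c#} 0 = 0" by simp
    show "\<And>n. PRn p b D \<beta> (Suc n) (period_ch c S) {#c#} 0 = step b c (RunT b S (\<lambda>_. 0) n) {#c#}" by (rule PR0)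
    show "\<And>n. 0 \<le> step b c (RunT b S (\<lambda>_. 0) n) {#c#}"
      by (rule step_nonneg) (use b01 in simp, rule RunT_nonneg, use b01 in simp, simp)
    show "\<And>n. step b c (RunT b S (\<lambda>_. 0) n) {#c#} \<le> step b c (RunT b S (\<lambda>_. 0) (Suc n)) {#c#}"
      by (rule step_mono[where Ka="KK 1 0" and Kb="KK 1 0"]) (rule b1, rule b1, rule RunT_mono_n[where R=1 and B=0], rule b_bnd, simp, use b01 in simp, simp)
    show "(\<lambda>n. step b c (RunT b S (\<lambda>_. 0) n) {#c#}) \<longlonglongrightarrow> step b c (RV b S (\<lambda>_. 0)) {#c#}"
      by (rule step_lim[where R=1 and B=0]) (rule b_bnd, simp)
  qed
  then show ?thesis unfolding period_r_def Rr_def Blk_def .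
qed

lemma period_gamma_eq: "period_gamma p D \<beta> c S = gam c S"
proof -
  have b1: "\<And>n G. \<bar>RunT (\<lambda>_. 0) S (\<lambda>_. 1) n G\<bar> \<le> KK 0 1" by (rule RunT_bound) simp_all
  have "(SUP n. PGn p D \<beta> n (period_ch c S) {#c#} 0) = step (\<lambda>_. 0) c (RV (\<lambda>_. 0) S (\<lambda>_. 1)) {#c#}"
  proof (rule SUP_shift[where Z="\<lambda>n. step (\<lambda>_. 0) c (RunT (\<lambda>_. 0) S (\<lambda>_. 1) n) {#c#}"])
    show "PGn p D \<beta> 0 (period_ch c S) {#c#} 0 = 0" by simp
    show "\<And>n. PGn p D \<beta> (Suc n) (period_ch c S) {#c#} 0 = step (\<lambda>_. 0) c (RunT (\<lambda>_. 0) S (\<lambda>_. 1) n) {#c#}" by (rule PG0)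
    show "\<And>n. 0 \<le> step (\<lambda>_. 0) c (RunT (\<lambda>_. 0) S (\<lambda>_. 1) n) {#c#}"
      by (rule step_nonneg) (simp, rule RunT_nonneg, simp, simp)
    show "\<And>n. step (\<lambda>_. 0) c (RunT (\<lambda>_. 0) S (\<lambda>_. 1) n) {#c#} \<le> step (\<lambda>_. 0) c (RunT (\<lambda>_. 0) S (\<lambda>_. 1) (Suc n)) {#c#}"
      by (rule step_mono[where Ka="KK 0 1" and Kb="KK 0 1"]) (rule b1, rule b1, rule RunT_mono_n[where R=0 and B=1], simp_all)
    show "(\<lambda>n. step (\<lambda>_. 0) c (RunT (\<lambda>_. 0) S (\<lambda>_. 1) n) {#c#}) \<longlonglongrightarrow> step (\<lambda>_. 0) c (RV (\<lambda>_. 0) S (\<lambda>_. 1)) {#c#}"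
      by (rule step_lim[where R=0 and B=1]) simp_all
  qed
  then show ?thesis unfolding period_gamma_def gam_def Gm_def Blk_def .
qed

lemma gam_nil: "gam c [] = q"
proof -
  have "\<And>G. RV (\<lambda>_. 0) [] (\<lambda>_. 1) G = 1"
    using RV_eq[where R=0 and B=1 and rb="\<lambda>_. 0" and Y="\<lambda>_. 1" and ps="[]"] by (simp add: first_in_def)
  then have "RV (\<lambda>_. 0) [] (\<lambda>_. 1) = (\<lambda>_. 1)" by (intro ext) simp
  then show ?thesis unfolding gam_def Gm_def Blk_def by (simp add: step_const0)
qed

lemma ratio: assumes co: "constructed_order p b D \<beta> \<sigma>" and k: "k < length \<sigma>" and j: "j \<notin> set (take k \<sigma>)"
  shows "Rr j (take k \<sigma>) * (1 - gam (\<sigma>!k) (take k \<sigma>)) \<le> Rr (\<sigma>!k) (take k \<sigma>) * (1 - gam j (take k \<sigma>))"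
proof (cases "k = 0")
  case True
  have "\<forall>i. period_r p b D \<beta> i [] \<le> period_r p b D \<beta> (\<sigma> ! 0) []" using co unfolding constructed_order_def by blast
  then have "period_r p b D \<beta> j [] \<le> period_r p b D \<beta> (\<sigma> ! 0) []" by blast
  then have "Rr j [] \<le> Rr (\<sigma>!0) []" by (simp only: period_r_eq)
  then have "Rr j [] * (1 - q) \<le> Rr (\<sigma>!0) [] * (1 - q)" using q_lt1 by (intro mult_right_mono) auto
  then show ?thesis using True by (simp add: gam_nil)
next
  case False
  let ?S = "take k \<sigma>" and ?c = "\<sigma>!k"
  have "\<forall>k. 1 \<le> k \<and> k < length \<sigma> \<longrightarrow>
        (\<forall>i. i \<notin> set (take k \<sigma>) \<longrightarrow>
           period_r p b D \<beta> i (take k \<sigma>) / (1 - period_gamma p D \<beta> i (take k \<sigma>))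
           \<le> period_r p b D \<beta> (\<sigma> ! k) (take k \<sigma>) / (1 - period_gamma p D \<beta> (\<sigma> ! k) (take k \<sigma>)))"
    using co unfolding constructed_order_def by blast
  moreover have k1: "1 \<le> k \<and> k < length \<sigma>" using False k by simp
  ultimately have "period_r p b D \<beta> j ?S / (1 - period_gamma p D \<beta> j ?S) \<le> period_r p b D \<beta> ?c ?S / (1 - period_gamma p D \<beta> ?c ?S)"
    using j by blast
  then have h: "Rr j ?S / (1 - gam j ?S) \<le> Rr ?c ?S / (1 - gam ?c ?S)"
    by (simp only: period_r_eq period_gamma_eq)
  have x: "0 < 1 - gam j ?S" using gam_bounds(2)[of j ?S] q_lt1 by simp
  have y: "0 < 1 - gam ?c ?S" using gam_bounds(2)[of ?c ?S] q_lt1 by simp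
  have "Rr j ?S * (1 - gam ?c ?S) \<le> Rr ?c ?S * (1 - gam j ?S)" by (rule cross_mult[OF x y h])
  then show ?thesis .
qed

lemma Rr_bound: "\<bar>Rr c S\<bar> \<le> 1 + q * KK 1 0"
  unfolding Rr_def Blk_def by (rule step_bound) (rule b_bnd, rule RV_bound, rule b_bnd, simp)

lemma W_blk: assumes "k < length \<sigma>" "nops (take k \<sigma>) G" "\<sigma>!k \<in># G"
  shows "W \<sigma> G = Rr (\<sigma>!k) (take k \<sigma>) + Gm (\<sigma>!k) (take k \<sigma>) (\<lambda>M. W \<sigma> (M + (G - {#\<sigma>!k#})))"
proof -
  have fi: "first_in \<sigma> G = Some (\<sigma>!k)" by (rule fi_at) (use assms in auto)
  have "W \<sigma> G = step b (\<sigma>!k) (W \<sigma>) G" using W_eq[of \<sigma> G] fi by simp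
  also have "\<dots> = step b (\<sigma>!k) (RV b (take k \<sigma>) (W \<sigma>)) G" by (simp add: W_unroll_fun)
  also have "\<dots> = Blk b (\<sigma>!k) (take k \<sigma>) (\<lambda>M. W \<sigma> (M + (G - {#\<sigma>!k#})))"
    by (rule Blk_rep[where R=1 and B=Kw]) (rule b_bnd, rule W_bound, use assms in auto)
  also have "\<dots> = Rr (\<sigma>!k) (take k \<sigma>) + Gm (\<sigma>!k) (take k \<sigma>) (\<lambda>M. W \<sigma> (M + (G - {#\<sigma>!k#})))"
    by (rule Blk_split[where B=Kw]) (rule W_bound)
  finally show ?thesis .
qed

lemma Q_blk: assumes "nops (take k \<sigma>) G" "j \<in># G"
  shows "Qv \<sigma> G j = Rr j (take k \<sigma>) + Gm j (take k \<sigma>) (\<lambda>M. W \<sigma> (M + (G - {#j#})))"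
proof -
  have "Qv \<sigma> G j = step b j (RV b (take k \<sigma>) (W \<sigma>)) G" unfolding Qv_def by (simp add: W_unroll_fun)
  also have "\<dots> = Blk b j (take k \<sigma>) (\<lambda>M. W \<sigma> (M + (G - {#j#})))"
    by (rule Blk_rep[where R=1 and B=Kw]) (rule b_bnd, rule W_bound, use assms in auto)
  also have "\<dots> = Rr j (take k \<sigma>) + Gm j (take k \<sigma>) (\<lambda>M. W \<sigma> (M + (G - {#j#})))"
    by (rule Blk_split[where B=Kw]) (rule W_bound)
  finally show ?thesis .
qed

end


lemma ms_swap1: assumes "c \<in># G" "j \<in># G" "j \<noteq> c"
  shows "M' + (M + (G - {#c#}) - {#j#}) = M + M' + (G - {#c#} - {#j#})"
proof -
  obtain G1 where g1: "G = add_mset c G1" using assms(1) by (blast dest: multi_member_split)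
  then have "j \<in># G1" using assms(2,3) by simp
  then obtain G2 where g2: "G1 = add_mset j G2" by (blast dest: multi_member_split)
  show ?thesis using g1 g2 by (simp add: add_ac)
qed

lemma ms_swap2: assumes "c \<in># G" "j \<in># G" "j \<noteq> c"
  shows "M + (M' + (G - {#j#}) - {#c#}) = M + M' + (G - {#c#} - {#j#})"
proof -
  obtain G1 where g1: "G = add_mset c G1" using assms(1) by (blast dest: multi_member_split)
  then have "j \<in># G1" using assms(2,3) by simp
  then obtain G2 where g2: "G1 = add_mset j G2" by (blast dest: multi_member_split)
  have "G = add_mset j (add_mset c G2)" using g1 g2 by (simp add: add_mset_commute)
  then show ?thesis using g1 g2 by (simp add: add_ac)
qed

context ct begin

lemma interchange:
  assumes co: "constructed_order p b D \<beta> \<sigma>" and k: "k < length \<sigma>"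
    and IH: "\<And>G j. nops (take (Suc k) \<sigma>) G \<Longrightarrow> j \<in># G \<Longrightarrow> Qv \<sigma> G j \<le> W \<sigma> G"
    and Pd: "\<And>G j. nops (take k \<sigma>) G \<Longrightarrow> j \<in># G \<Longrightarrow> Qv \<sigma> G j - W \<sigma> G \<le> \<delta>"
    and d0: "0 \<le> \<delta>"
    and G1: "nops (take k \<sigma>) G" and G2: "j \<in># G"
  shows "Qv \<sigma> G j - W \<sigma> G \<le> q * \<delta>"
proof -
  let ?S = "take k \<sigma>" and ?c = "\<sigma>!k"
  have qd: "0 \<le> q * \<delta>" using d0 q_pos by simp
  have tS: "take (Suc k) \<sigma> = ?S @ [?c]" using k by (simp add: take_Suc_conv_app_nth)
  show ?thesis
  proof (cases "?c \<in># G")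
    case False
    then have "nops (take (Suc k) \<sigma>) G" using G1 tS by auto
    then have "Qv \<sigma> G j \<le> W \<sigma> G" using IH G2 by blast
    then show ?thesis using qd by linarith
  next
    case cG: True
    show ?thesis
    proof (cases "j = ?c")
      case True
      have fi: "first_in \<sigma> G = Some ?c" by (rule fi_at) (use k G1 cG in auto)
      then have "W \<sigma> G = Qv \<sigma> G j" using W_eq[of \<sigma> G] True unfolding Qv_def by simp
      then show ?thesis using qd by simp
    next
      case False
      let ?Gz = "G - {#?c#} - {#j#}"
      let ?f = "\<lambda>M M'. W \<sigma> (M + M' + ?Gz)"
      have fb: "\<And>M M'. \<bar>?f M M'\<bar> \<le> Kw" by (rule W_bound)
      have jc: "j \<in># G - {#?c#}" using G2 False by (simp add: in_diff_count)
      have A: "W \<sigma> G = Rr ?c ?S + Gm ?c ?S (\<lambda>M. W \<sigma> (M + (G - {#?c#})))"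
        by (rule W_blk) (use k G1 cG in auto)
      have B: "\<And>M. nops ?S M \<Longrightarrow> (Rr j ?S - \<delta>) * 1 + 1 * Gm j ?S (\<lambda>M'. ?f M M') \<le> W \<sigma> (M + (G - {#?c#}))"
      proof -
        fix M assume M: "nops ?S M"
        have n1: "nops ?S (M + (G - {#?c#}))" using M G1 by (auto dest: in_diffD)
        have j1: "j \<in># M + (G - {#?c#})" using jc by simp
        have "Qv \<sigma> (M + (G - {#?c#})) j = Rr j ?S + Gm j ?S (\<lambda>M'. W \<sigma> (M' + (M + (G - {#?c#}) - {#j#})))"
          by (rule Q_blk) (rule n1, rule j1)
        also have "(\<lambda>M'. W \<sigma> (M' + (M + (G - {#?c#}) - {#j#}))) = (\<lambda>M'. ?f M M')"
          by (simp only: ms_swap1[OF cG G2 False])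
        finally have e: "Qv \<sigma> (M + (G - {#?c#})) j = Rr j ?S + Gm j ?S (\<lambda>M'. ?f M M')" .
        have "Qv \<sigma> (M + (G - {#?c#})) j - W \<sigma> (M + (G - {#?c#})) \<le> \<delta>" by (rule Pd) (rule n1, rule j1)
        then show "(Rr j ?S - \<delta>) * 1 + 1 * Gm j ?S (\<lambda>M'. ?f M M') \<le> W \<sigma> (M + (G - {#?c#}))" using e by simp
      qed
      have gb: "\<And>M. \<bar>Gm j ?S (\<lambda>M'. ?f M M')\<bar> \<le> q * Kw" by (rule Gm_bound) (rule fb)
      have gb2: "\<And>M'. \<bar>Gm ?c ?S (\<lambda>M. ?f M M')\<bar> \<le> q * Kw" by (rule Gm_bound) (rule fb)
      have B2: "Gm ?c ?S (\<lambda>M. (Rr j ?S - \<delta>) * 1 + 1 * Gm j ?S (\<lambda>M'. ?f M M')) \<le> Gm ?c ?S (\<lambda>M. W \<sigma> (M + (G - {#?c#})))"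
      proof (rule Gm_mono[where Bx="\<bar>Rr j ?S - \<delta>\<bar> + q * Kw" and By=Kw])
        fix M show "\<bar>(Rr j ?S - \<delta>) * 1 + 1 * Gm j ?S (\<lambda>M'. ?f M M')\<bar> \<le> \<bar>Rr j ?S - \<delta>\<bar> + q * Kw"
          using gb[of M] abs_triangle_ineq[of "Rr j ?S - \<delta>" "Gm j ?S (\<lambda>M'. ?f M M')"] by simp
      next
        fix M show "\<bar>W \<sigma> (M + (G - {#?c#}))\<bar> \<le> Kw" by (rule W_bound)
      next
        fix M assume "nops ?S M" then show "(Rr j ?S - \<delta>) * 1 + 1 * Gm j ?S (\<lambda>M'. ?f M M') \<le> W \<sigma> (M + (G - {#?c#}))"
          by (rule B)
      qed
      have B3: "Gm ?c ?S (\<lambda>M. (Rr j ?S - \<delta>) * 1 + 1 * Gm j ?S (\<lambda>M'. ?f M M'))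
          = (Rr j ?S - \<delta>) * Gm ?c ?S (\<lambda>_. 1) + 1 * Gm ?c ?S (\<lambda>M. Gm j ?S (\<lambda>M'. ?f M M'))"
        by (rule Gm_lin[where Bx=1 and By="q * Kw"]) (simp, rule gb)
      have D: "Qv \<sigma> G j = Rr j ?S + Gm j ?S (\<lambda>M'. W \<sigma> (M' + (G - {#j#})))"
        by (rule Q_blk) (rule G1, rule G2)
      have E: "\<And>M'. nops ?S M' \<Longrightarrow> W \<sigma> (M' + (G - {#j#})) = Rr ?c ?S * 1 + 1 * Gm ?c ?S (\<lambda>M. ?f M M')"
      proof -
        fix M' assume M': "nops ?S M'"
        have n1: "nops ?S (M' + (G - {#j#}))" using M' G1 by (auto dest: in_diffD)
        have c1: "?c \<in># M' + (G - {#j#})" using cG False by (simp add: in_diff_count)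
        have "W \<sigma> (M' + (G - {#j#})) = Rr ?c ?S + Gm ?c ?S (\<lambda>M. W \<sigma> (M + (M' + (G - {#j#}) - {#?c#})))"
          by (rule W_blk) (rule k, rule n1, rule c1)
        also have "(\<lambda>M. W \<sigma> (M + (M' + (G - {#j#}) - {#?c#}))) = (\<lambda>M. ?f M M')"
          by (simp only: ms_swap2[OF cG G2 False])
        finally show "W \<sigma> (M' + (G - {#j#})) = Rr ?c ?S * 1 + 1 * Gm ?c ?S (\<lambda>M. ?f M M')" by simp
      qed
      have E2: "Gm j ?S (\<lambda>M'. W \<sigma> (M' + (G - {#j#}))) = Gm j ?S (\<lambda>M'. Rr ?c ?S * 1 + 1 * Gm ?c ?S (\<lambda>M. ?f M M'))"
      proof (rule Gm_cong[where Bx=Kw and By="\<bar>Rr ?c ?S\<bar> + q * Kw"])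
        fix M' show "\<bar>W \<sigma> (M' + (G - {#j#}))\<bar> \<le> Kw" by (rule W_bound)
      next
        fix M' show "\<bar>Rr ?c ?S * 1 + 1 * Gm ?c ?S (\<lambda>M. ?f M M')\<bar> \<le> \<bar>Rr ?c ?S\<bar> + q * Kw"
          using gb2[of M'] abs_triangle_ineq[of "Rr ?c ?S" "Gm ?c ?S (\<lambda>M. ?f M M')"] by simp
      next
        fix M' assume "nops ?S M'" then show "W \<sigma> (M' + (G - {#j#})) = Rr ?c ?S * 1 + 1 * Gm ?c ?S (\<lambda>M. ?f M M')"
          by (rule E)
      qed
      have E3: "Gm j ?S (\<lambda>M'. Rr ?c ?S * 1 + 1 * Gm ?c ?S (\<lambda>M. ?f M M'))
          = Rr ?c ?S * Gm j ?S (\<lambda>_. 1) + 1 * Gm j ?S (\<lambda>M'. Gm ?c ?S (\<lambda>M. ?f M M'))"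
        by (rule Gm_lin[where Bx=1 and By="q * Kw"]) (simp, rule gb2)
      have comm: "Gm ?c ?S (\<lambda>M. Gm j ?S (\<lambda>M'. ?f M M')) = Gm j ?S (\<lambda>M'. Gm ?c ?S (\<lambda>M. ?f M M'))"
        by (rule Gm_comm[where C=Kw]) (rule fb)
      have jS: "j \<notin> set ?S" using G1 G2 by blast
      have rat: "Rr j ?S * (1 - gam ?c ?S) \<le> Rr ?c ?S * (1 - gam j ?S)" by (rule ratio[OF co k jS])
      have rat': "Rr j ?S - Rr j ?S * gam ?c ?S \<le> Rr ?c ?S - Rr ?c ?S * gam j ?S" using rat by (simp add: algebra_simps)
      have gq: "gam ?c ?S \<le> q" by (rule gam_bounds)
      have dg: "\<delta> * gam ?c ?S \<le> \<delta> * q" by (rule mult_left_mono[OF gq d0])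
      have ex: "(Rr j ?S - \<delta>) * gam ?c ?S = Rr j ?S * gam ?c ?S - \<delta> * gam ?c ?S" by (simp add: algebra_simps)
      let ?X = "Gm j ?S (\<lambda>M'. Gm ?c ?S (\<lambda>M. ?f M M'))"
      have Wge: "W \<sigma> G \<ge> Rr ?c ?S + (Rr j ?S - \<delta>) * gam ?c ?S + ?X"
        using A B2 B3 comm unfolding gam_def by simp
      have Qeq: "Qv \<sigma> G j = Rr j ?S + Rr ?c ?S * gam j ?S + ?X"
        using D E2 E3 unfolding gam_def by simp
      show ?thesis using Wge Qeq rat' dg ex by (simp add: mult.commute)
    qed
  qed
qed

end


context ct begin

lemma bellman_i: assumes co: "constructed_order p b D \<beta> \<sigma>"
  shows "i \<le> length \<sigma> \<Longrightarrow> \<forall>G j. nops (take (length \<sigma> - i) \<sigma>) G \<longrightarrow> j \<in># G \<longrightarrow> Qv \<sigma> G j \<le> W \<sigma> G"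
proof (induction i)
  case 0
  have "set \<sigma> = UNIV" using co unfolding constructed_order_def is_type_order_def by simp
  then show ?case by simp
next
  case (Suc i)
  let ?k = "length \<sigma> - Suc i"
  have k: "?k < length \<sigma>" using Suc.prems by simp
  have kk: "Suc ?k = length \<sigma> - i" using Suc.prems by simp
  have IH0: "\<forall>G j. nops (take (length \<sigma> - i) \<sigma>) G \<longrightarrow> j \<in># G \<longrightarrow> Qv \<sigma> G j \<le> W \<sigma> G"
    by (rule Suc.IH) (use Suc.prems in simp)
  have IH: "\<And>G j. nops (take (Suc ?k) \<sigma>) G \<Longrightarrow> j \<in># G \<Longrightarrow> Qv \<sigma> G j \<le> W \<sigma> G"
    by (subst (asm) kk) (use IH0 in blast)
  define C0 where "C0 = 1 + q * Kw + Kw"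
  have Kw0: "0 \<le> Kw" using W_bound[of \<sigma> "{#}"] by simp
  have C00: "0 \<le> C0" unfolding C0_def using Kw0 q_pos by simp
  have P: "\<forall>G j. nops (take ?k \<sigma>) G \<longrightarrow> j \<in># G \<longrightarrow> Qv \<sigma> G j - W \<sigma> G \<le> q^n * C0" for n
  proof (induction n)
    case 0
    show ?case
    proof (intro allI impI)
      fix G j
      show "Qv \<sigma> G j - W \<sigma> G \<le> q^0 * C0"
        using Qv_bound[of \<sigma> G j] W_bound[of \<sigma> G] unfolding C0_def by simp
    qed
  next
    case (Suc n)
    show ?case
    proof (intro allI impI)
      fix G j assume G1: "nops (take ?k \<sigma>) G" and G2: "j \<in># G"
      have "Qv \<sigma> G j - W \<sigma> G \<le> q * (q^n * C0)"
      proof (rule interchange[OF co k IH _ _ G1 G2])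
        show "\<And>G j. nops (take ?k \<sigma>) G \<Longrightarrow> j \<in># G \<Longrightarrow> Qv \<sigma> G j - W \<sigma> G \<le> q^n * C0"
          using Suc.IH by blast
        show "0 \<le> q^n * C0" using C00 q_pos by simp
      qed (assumption)+
      then show "Qv \<sigma> G j - W \<sigma> G \<le> q^Suc n * C0" by (simp add: mult.assoc)
    qed
  qed
  show ?case
  proof (intro allI impI)
    fix G j assume G1: "nops (take (length \<sigma> - Suc i) \<sigma>) G" and G2: "j \<in># G"
    have "Qv \<sigma> G j - W \<sigma> G \<le> 0"
    proof (rule le_zero_geom[where q=q and C=C0])
      fix n
      have "\<forall>G j. nops (take ?k \<sigma>) G \<longrightarrow> j \<in># G \<longrightarrow> Qv \<sigma> G j - W \<sigma> G \<le> q^n * C0" by (rule P)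
      then show "Qv \<sigma> G j - W \<sigma> G \<le> q^n * C0" using G1 G2 by blast
    qed (use q_pos q_lt1 in auto)
    then show "Qv \<sigma> G j \<le> W \<sigma> G" by simp
  qed
qed

lemma bellman: assumes co: "constructed_order p b D \<beta> \<sigma>" and j: "j \<in># G"
  shows "Qv \<sigma> G j \<le> W \<sigma> G"
proof -
  have "\<forall>G j. nops (take (length \<sigma> - length \<sigma>) \<sigma>) G \<longrightarrow> j \<in># G \<longrightarrow> Qv \<sigma> G j \<le> W \<sigma> G"
    by (rule bellman_i[OF co order_refl])
  then have "nops (take (length \<sigma> - length \<sigma>) \<sigma>) G \<longrightarrow> j \<in># G \<longrightarrow> Qv \<sigma> G j \<le> W \<sigma> G" by blast
  moreover have "nops (take (length \<sigma> - length \<sigma>) \<sigma>) G" by simp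
  ultimately show ?thesis using j by blast
qed

lemma Vn_idx: assumes "set \<sigma> = UNIV"
  shows "Vn p b D \<beta> n (index_policy \<sigma>) h F = exp (- \<beta> * real (length h)) * RunT b \<sigma> (\<lambda>_. 0) n F"
proof (induction n arbitrary: h F)
  case 0 then show ?case by simp
next
  case (Suc n)
  show ?case
  proof (cases "F = {#}")
    case True
    have "first_in \<sigma> F = None" using True by (simp add: fi_None)
    then show ?thesis using True by simp
  next
    case False
    obtain a where a: "first_in \<sigma> F = Some a" using fi_total[OF assms False] by blast
    have ip: "index_policy \<sigma> h F = a" using a by (simp add: index_policy_def)
    have IH: "\<And>x G. Vn p b D \<beta> n (index_policy \<sigma>) (h @ [x]) G = exp (- \<beta> * real (length h)) * q * RunT b \<sigma> (\<lambda>_. 0) n G"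
    proof -
      fix x G
      have l: "length (h @ [x]) = Suc (length h)" by simp
      show "Vn p b D \<beta> n (index_policy \<sigma>) (h @ [x]) G = exp (- \<beta> * real (length h)) * q * RunT b \<sigma> (\<lambda>_. 0) n G"
        by (simp only: Suc.IH l exp_Suc)
    qed
    show ?thesis using False a ip by (simp add: Let_def IH step_def algebra_simps)
  qed
qed

lemma pv_idx: assumes "set \<sigma> = UNIV"
  shows "policy_value p b D \<beta> (index_policy \<sigma>) F = W \<sigma> F"
proof -
  have "policy_value p b D \<beta> (index_policy \<sigma>) F = (SUP n. RunT b \<sigma> (\<lambda>_. 0) n F)"
    unfolding policy_value_def using Vn_idx[OF assms] by simp
  also have "\<dots> = RV b \<sigma> (\<lambda>_. 0) F"
  proof (rule incseq_SUP_lim)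
    show "incseq (\<lambda>n. RunT b \<sigma> (\<lambda>_. 0) n F)"
      by (rule incseq_SucI) (rule RunT_mono_n[where R=1 and B=0], rule b_bnd, simp, use b01 in simp, simp)
    show "(\<lambda>n. RunT b \<sigma> (\<lambda>_. 0) n F) \<longlonglongrightarrow> RV b \<sigma> (\<lambda>_. 0) F"
      by (rule RV_lim[where R=1 and B=0]) (rule b_bnd, simp)
  qed
  finally show ?thesis unfolding W_def .
qed

lemma exp_le1: "exp (- \<beta> * real L) \<le> 1"
  using bpos by simp

lemma Vn_bound: "\<bar>Vn p b D \<beta> n pol h F\<bar> \<le> real n"
proof (induction n arbitrary: h F)
  case 0 then show ?case by simp
next
  case (Suc n)
  show ?case
  proof (cases "F = {#}")
    case True then show ?thesis by simp
  next
    case False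
    let ?ty = "pol h F"
    let ?e = "exp (- \<beta> * real (length h))"
    have be: "\<bar>b (snd ?ty) * ?e\<bar> \<le> 1"
      using b01[of "snd ?ty"] exp_le1[of "length h"] by (simp add: abs_mult mult_le_one)
    have ee: "\<bar>EE (D (snd ?ty)) (\<lambda>M. Vn p b D \<beta> n pol (h @ [(?ty, Some M)]) (F - {#?ty#} + children ?ty M))\<bar> \<le> real n"
      by (rule EE_bnd) (rule Suc.IH)
    have X: "\<bar>b (snd ?ty) * ?e + EE (D (snd ?ty)) (\<lambda>M. Vn p b D \<beta> n pol (h @ [(?ty, Some M)]) (F - {#?ty#} + children ?ty M))\<bar> \<le> real n + 1"
      using be ee abs_triangle_ineq[of "b (snd ?ty) * ?e"] by linarith
    have Y: "\<bar>Vn p b D \<beta> n pol (h @ [(?ty, None)]) (F - {#?ty#})\<bar> \<le> real n + 1"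
      using Suc.IH[of "h @ [(?ty, None)]" "F - {#?ty#}"] by simp
    have "\<bar>p ?ty * (b (snd ?ty) * ?e + EE (D (snd ?ty)) (\<lambda>M. Vn p b D \<beta> n pol (h @ [(?ty, Some M)]) (F - {#?ty#} + children ?ty M)))
          + (1 - p ?ty) * Vn p b D \<beta> n pol (h @ [(?ty, None)]) (F - {#?ty#})\<bar> \<le> real n + 1"
      by (rule conv_bound) (rule p0, rule p1, rule X, rule Y)
    then show ?thesis using False by (simp add: Let_def)
  qed
qed

lemma verif: assumes vp: "valid_policy pol" and bel: "\<And>G j. j \<in># G \<Longrightarrow> Qv \<sigma> G j \<le> W \<sigma> G"
  shows "Vn p b D \<beta> n pol h F \<le> exp (- \<beta> * real (length h)) * W \<sigma> F"
proof (induction n arbitrary: h F)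
  case 0 then show ?case using W_nonneg[of \<sigma> F] by simp
next
  case (Suc n)
  show ?case
  proof (cases "F = {#}")
    case True then show ?thesis using W_nonneg[of \<sigma> F] by simp
  next
    case False
    let ?ty = "pol h F"
    let ?e = "exp (- \<beta> * real (length h))"
    have e0: "0 \<le> ?e" by simp
    have tyF: "?ty \<in># F" using vp False unfolding valid_policy_def by blast
    have IH: "\<And>x G. Vn p b D \<beta> n pol (h @ [x]) G \<le> ?e * q * W \<sigma> G"
    proof -
      fix x G
      have l: "length (h @ [x]) = Suc (length h)" by simp
      have "Vn p b D \<beta> n pol (h @ [x]) G \<le> exp (- \<beta> * real (length (h @ [x]))) * W \<sigma> G" by (rule Suc.IH)
      then show "Vn p b D \<beta> n pol (h @ [x]) G \<le> ?e * q * W \<sigma> G" by (simp only: l exp_Suc)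
    qed
    let ?V = "\<lambda>M. Vn p b D \<beta> n pol (h @ [(?ty, Some M)]) (F - {#?ty#} + children ?ty M)"
    let ?WW = "\<lambda>M. ?e * q * W \<sigma> (F - {#?ty#} + children ?ty M)"
    have E1: "EE (D (snd ?ty)) ?V \<le> EE (D (snd ?ty)) ?WW"
    proof (rule EE_mono[where B="real n" and C="\<bar>?e * q\<bar> * Kw"])
      fix M show "\<bar>?V M\<bar> \<le> real n" by (rule Vn_bound)
      show "\<bar>?WW M\<bar> \<le> \<bar>?e * q\<bar> * Kw"
        using W_bound[of \<sigma> "F - {#?ty#} + children ?ty M"] by (simp add: abs_mult mult_left_mono)
      show "?V M \<le> ?WW M" by (rule IH)
    qed
    have E2: "EE (D (snd ?ty)) ?WW = ?e * q * EE (D (snd ?ty)) (\<lambda>M. W \<sigma> (F - {#?ty#} + children ?ty M))"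
      by simp
    have "Vn p b D \<beta> (Suc n) pol h F = p ?ty * (b (snd ?ty) * ?e + EE (D (snd ?ty)) ?V)
          + (1 - p ?ty) * Vn p b D \<beta> n pol (h @ [(?ty, None)]) (F - {#?ty#})"
      using False by (simp add: Let_def)
    also have "\<dots> \<le> p ?ty * (b (snd ?ty) * ?e + EE (D (snd ?ty)) ?WW) + (1 - p ?ty) * (?e * q * W \<sigma> (F - {#?ty#}))"
      using E1 IH[of "(?ty, None)" "F - {#?ty#}"] p0[of ?ty] p1[of ?ty] b01[of "snd ?ty"]
      by (intro add_mono mult_left_mono) auto
    also have "\<dots> = ?e * Qv \<sigma> F ?ty"
      unfolding Qv_def step_def E2 by (simp add: algebra_simps)
    also have "\<dots> \<le> ?e * W \<sigma> F" using bel[OF tyF] e0 by (rule mult_left_mono)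
    finally show ?thesis .
  qed
qed

lemma valid_idx: fixes \<sigma> :: "'c ntype list" shows "set \<sigma> = UNIV \<Longrightarrow> valid_policy (index_policy \<sigma>)"
  unfolding valid_policy_def
proof (intro allI impI)
  fix h and F :: "'c frontier" assume s: "set \<sigma> = UNIV" and F: "F \<noteq> {#}"
  obtain a where a: "first_in \<sigma> F = Some a" using fi_total[OF s F] by blast
  then show "index_policy \<sigma> h F \<in># F" using fi_Some[OF a] by (simp add: index_policy_def)
qed

lemma optimal: assumes co: "constructed_order p b D \<beta> \<sigma>"
  shows "optimal_policy p b D \<beta> (index_policy \<sigma>)"
proof -
  have s: "set \<sigma> = UNIV" using co unfolding constructed_order_def is_type_order_def by simp
  have bel: "\<And>G j. j \<in># G \<Longrightarrow> Qv \<sigma> G j \<le> W \<sigma> G" by (rule bellman[OF co])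
  show ?thesis unfolding optimal_policy_def
  proof (intro conjI allI impI)
    show "valid_policy (index_policy \<sigma>)" by (rule valid_idx[OF s])
    fix F0 :: "'c frontier" and pol' :: "'c policy"
    assume vp: "valid_policy pol'"
    have "policy_value p b D \<beta> pol' F0 \<le> W \<sigma> F0"
      unfolding policy_value_def
    proof (rule cSUP_least)
      show "UNIV \<noteq> {}" by simp
      fix n show "Vn p b D \<beta> n pol' [] F0 \<le> W \<sigma> F0" using verif[OF vp bel, of n "[]" F0] by simp
    qed
    then show "policy_value p b D \<beta> pol' F0 \<le> policy_value p b D \<beta> (index_policy \<sigma>) F0"
      using pv_idx[OF s] by simp
  qed
qed

end


context ct begin

definition score :: "'c ntype list \<Rightarrow> 'c ntype \<Rightarrow> real" where
  "score ps i = (if ps = [] then period_r p b D \<beta> i []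
      else period_r p b D \<beta> i ps / (1 - period_gamma p D \<beta> i ps))"

definition nxt :: "'c ntype list \<Rightarrow> 'c ntype" where
  "nxt ps = (SOME x. x \<notin> set ps \<and> (\<forall>i. i \<notin> set ps \<longrightarrow> score ps i \<le> score ps x))"

primrec bld :: "nat \<Rightarrow> 'c ntype list" where
  "bld 0 = []"
| "bld (Suc n) = bld n @ [nxt (bld n)]"

lemma nxt_prop: assumes "set ps \<noteq> UNIV"
  shows "nxt ps \<notin> set ps \<and> (\<forall>i. i \<notin> set ps \<longrightarrow> score ps i \<le> score ps (nxt ps))"
proof -
  let ?A = "UNIV - set ps"
  have fin: "finite ?A" by simp
  have ne: "?A \<noteq> {}" using assms by auto
  have "Max (score ps ` ?A) \<in> score ps ` ?A" using fin ne by (intro Max_in) auto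
  then obtain x where x: "x \<in> ?A" "score ps x = Max (score ps ` ?A)" by auto
  have "\<forall>i. i \<notin> set ps \<longrightarrow> score ps i \<le> score ps x"
  proof (intro allI impI)
    fix i assume "i \<notin> set ps"
    then have "score ps i \<in> score ps ` ?A" by auto
    then show "score ps i \<le> score ps x" using x(2) fin by (simp add: Max_ge)
  qed
  then have "\<exists>x. x \<notin> set ps \<and> (\<forall>i. i \<notin> set ps \<longrightarrow> score ps i \<le> score ps x)" using x(1) by blast
  then show ?thesis unfolding nxt_def by (rule someI_ex)
qed

lemma length_bld: "length (bld n) = n"
  by (induction n) auto

lemma distinct_bld: "n \<le> CARD('c ntype) \<Longrightarrow> distinct (bld n)"
proof (induction n)
  case 0 then show ?case by simp
next
  case (Suc n)
  have d: "distinct (bld n)" using Suc by simp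
  have "card (set (bld n)) = n" using distinct_card[OF d] length_bld by simp
  then have "set (bld n) \<noteq> UNIV" using Suc.prems by auto
  then have "nxt (bld n) \<notin> set (bld n)" using nxt_prop by blast
  then show ?case using d by simp
qed

lemma take_bld: "k \<le> n \<Longrightarrow> take k (bld n) = bld k"
proof (induction n)
  case 0 then show ?case by simp
next
  case (Suc n)
  show ?case
  proof (cases "k = Suc n")
    case True then show ?thesis using length_bld[of "Suc n"] by simp
  next
    case False
    then have "k \<le> n" using Suc.prems by simp
    then show ?thesis using Suc.IH length_bld[of n] by simp
  qed
qed

lemma nth_bld: "k < n \<Longrightarrow> bld n ! k = nxt (bld k)"
proof -
  assume k: "k < n"
  have "bld n ! k = take (Suc k) (bld n) ! k" using k by simp
  also have "\<dots> = bld (Suc k) ! k" using k by (simp add: take_bld)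
  also have "\<dots> = nxt (bld k)" using length_bld[of k] by (simp add: nth_append)
  finally show ?thesis .
qed

lemma exists_constructed: "\<exists>\<sigma>. constructed_order p b D \<beta> \<sigma>"
proof -
  let ?N = "CARD('c ntype)"
  let ?\<sigma> = "bld ?N"
  have d: "distinct ?\<sigma>" by (rule distinct_bld) simp
  have l: "length ?\<sigma> = ?N" by (rule length_bld)
  have "card (set ?\<sigma>) = ?N" using distinct_card[OF d] l by simp
  then have s: "set ?\<sigma> = UNIV" by (simp add: card_eq_UNIV_imp_eq_UNIV)
  have N0: "0 < ?N" by simp
  have nu: "\<And>k. k < ?N \<Longrightarrow> set (bld k) \<noteq> UNIV"
  proof -
    fix k assume k: "k < ?N"
    have "distinct (bld k)" using k by (intro distinct_bld) simp
    then have "card (set (bld k)) = k" using distinct_card length_bld by metis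
    then show "set (bld k) \<noteq> UNIV" using k by auto
  qed
  have "constructed_order p b D \<beta> ?\<sigma>"
    unfolding constructed_order_def
  proof (intro conjI allI impI)
    show "is_type_order ?\<sigma>" unfolding is_type_order_def using d s by simp
  next
    fix i
    have e0: "?\<sigma> ! 0 = nxt []" using nth_bld[OF N0] by simp
    have "\<forall>i. i \<notin> set [] \<longrightarrow> score [] i \<le> score [] (nxt [])" using nxt_prop[of "[]"] by simp
    then have "score [] i \<le> score [] (nxt [])" using spec[of _ i] by (metis empty_iff empty_set)
    then show "period_r p b D \<beta> i [] \<le> period_r p b D \<beta> (?\<sigma> ! 0) []" using e0 unfolding score_def by simp
  next
    fix k i assume k: "1 \<le> k \<and> k < length ?\<sigma>" and i: "i \<notin> set (take k ?\<sigma>)"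
    have t: "take k ?\<sigma> = bld k" using k l by (simp add: take_bld)
    have n: "?\<sigma> ! k = nxt (bld k)" using k l by (simp add: nth_bld)
    have ne: "bld k \<noteq> []" using k length_bld[of k] by auto
    have "\<forall>i. i \<notin> set (bld k) \<longrightarrow> score (bld k) i \<le> score (bld k) (nxt (bld k))"
      using nxt_prop[OF nu] k l by simp
    moreover have i': "i \<notin> set (bld k)" using i t by simp
    ultimately have "score (bld k) i \<le> score (bld k) (nxt (bld k))" by blast
    then show "period_r p b D \<beta> i (take k ?\<sigma>) / (1 - period_gamma p D \<beta> i (take k ?\<sigma>))
           \<le> period_r p b D \<beta> (?\<sigma> ! k) (take k ?\<sigma>) / (1 - period_gamma p D \<beta> (?\<sigma> ! k) (take k ?\<sigma>))"
      using t n ne unfolding score_def by simp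
  qed
  then show ?thesis by blast
qed

end

theorem theorem8p1:
  fixes p :: "('c::finite) ntype \<Rightarrow> real"
    and b :: "'c \<Rightarrow> real"
    and D :: "'c \<Rightarrow> 'c multiset pmf"
    and \<beta> :: real
  assumes "\<And>ty. 0 \<le> p ty \<and> p ty \<le> 1"
    and "\<And>c. 0 \<le> b c \<and> b c \<le> 1"
    and "\<beta> > 0"
  shows "(\<exists>\<sigma>. is_type_order \<sigma> \<and> optimal_policy p b D \<beta> (index_policy \<sigma>))
       \<and> (\<forall>\<sigma>. constructed_order p b D \<beta> \<sigma> \<longrightarrow> optimal_policy p b D \<beta> (index_policy \<sigma>))"
proof -
  interpret ct p b D \<beta> by (rule ct.intro) (use assms in auto)
  have opt: "\<forall>\<sigma>. constructed_order p b D \<beta> \<sigma> \<longrightarrow> optimal_policy p b D \<beta> (index_policy \<sigma>)"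
    using optimal by blast
  obtain \<sigma> where co: "constructed_order p b D \<beta> \<sigma>" using exists_constructed by blast
  have "is_type_order \<sigma>" using co unfolding constructed_order_def by simp
  then have "\<exists>\<sigma>. is_type_order \<sigma> \<and> optimal_policy p b D \<beta> (index_policy \<sigma>)" using opt co by blast
  then show ?thesis using opt by blast
qed



end
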